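(* If $N_1,N_2,N_3$ are feasible perfect negators, then $G=\operatorname{NNN}(N_1,N_2,N_3)$ is a bicritical snark.
   Context: A multipole consists of vertices and edges; each edge has two ends, each either at a vertex or free (a semiedge); all multipoles are cubic. Let $\mathbb{K}=\{(0,1),(1,0),(1,1)\}\subset\mathbb{Z}_2\times\mathbb{Z}_2$. A colouring of a multipole assigns elements of $\mathbb{K}$ to edges so that the three edge ends at each vertex get distinct colours. A snark is a connected cubic graph with no colouring. For distinct vertices $x,y$ of a graph $G$, $G-\{x,y\}$ is the multipole obtained by deleting $x,y$ (edges to other vertices become dangling edges; an edge $xy$, if present, is kept as an isolated edge). A snark is bicritical if $G-\{x,y\}$ is colourable for all distinct vertices $x,y$. Negator: for a snark $H$ of girth at least $5$ and a path $uwv$ in $H$, $N=\operatorname{Neg}(H;u,v)$ is the $(2,2,1)$-pole $N(I,O,r)$ obtained by deleting $u,w,v$, with $I=\{i_1,i_2\}$ the semiedges formerly at $u$, $O=\{o_1,o_2\}$ those formerly at $v$, and $r$ the one formerly at $w$. $N$ is perfect if the set of tuples $(\varphi(i_1),\varphi(i_2),\varphi(o_1),\varphi(o_2),\varphi(r))$ over its colourings equals $\{(z,z,a,b,a+b),(a,b,z,z,a+b): z,a,b\in\mathbb{K}, a\ne b\}$. $N$ is feasible if (0) $H-\{x,y\}$ is colourable for all distinct $x,y\in V(N)$; (i) for every $x\in\{u,v\}$ and $y\in V(N)$ and any two dangling edges $e,f$ of the $6$-pole $H-\{x,y\}$ formerly incident with $x$, there is a colouring $\varphi$ of $H-\{x,y\}$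 with $\varphi(e)=\varphi(f)$; (ii) for every vertex $y\in V(N)$ there exist colourings $\varphi,\psi$ of the $8$-pole $N-y$ (delete $y$, its edges become dangling) with $\varphi(i_1,i_2,o_1,o_2,r)=(a,a,b,b,a)$ and $\psi(i_1,i_2,o_1,o_2,r)=(a,a,b,b,b)$ for some $a,b\in\mathbb{K}$ with $a\ne b$. For negators $N_j(I_j,O_j,r_j)$, $j=1,2,3$, $\operatorname{NNN}(N_1,N_2,N_3)$ is the cubic graph obtained by performing the junctions (identifying free ends in pairs along arbitrary bijections) of $O_1$ with $I_2$, $O_2$ with $I_3$, $O_3$ with $I_1$, and adding a new vertex incident with $r_1,r_2,r_3$. *)

theory Defs
  imports Main "HOL-Library.Z2" "HOL-Library.Product_Plus"
begin

type_synonym colour = "bit \<times> bit"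

definition KK :: "colour set" where
  "KK = {(0,1), (1,0), (1,1)}"

text \<open>A multipole has a vertex set, an edge set, and for every edge e and each of its
two ends (indexed by a boolean) either the vertex the end is attached to (Some v)
or None if the end is free.\<close>

record ('v, 'e) multipole =
  verts :: "'v set"
  edges :: "'e set"
  endpt :: "'e \<Rightarrow> bool \<Rightarrow> 'v option"

definition ends_at :: "('v, 'e) multipole \<Rightarrow> 'v \<Rightarrow> ('e \<times> bool) set" where
  "ends_at M x = {(e, b). e \<in> edges M \<and> endpt M e b = Some x}"

definition incident :: "('v, 'e) multipole \<Rightarrow> 'e \<Rightarrow> 'v \<Rightarrow> bool" where
  "incident M e x \<longleftrightarrow> e \<in> edges M \<and> (\<exists>b. endpt M e b = Some x)"

definition is_multipole :: "('v, 'e) multipole \<Rightarrow> bool" where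
  "is_multipole M \<longleftrightarrow> finite (verts M) \<and> finite (edges M) \<and>
     (\<forall>e\<in>edges M. \<forall>b. endpt M e b = None \<or> the (endpt M e b) \<in> verts M) \<and>
     (\<forall>x\<in>verts M. card (ends_at M x) = 3)"

definition is_graph :: "('v, 'e) multipole \<Rightarrow> bool" where
  "is_graph M \<longleftrightarrow> is_multipole M \<and> (\<forall>e\<in>edges M. \<forall>b. endpt M e b \<noteq> None)"

definition adj :: "('v, 'e) multipole \<Rightarrow> 'v \<Rightarrow> 'v \<Rightarrow> bool" where
  "adj M x y \<longleftrightarrow> (\<exists>e\<in>edges M. endpt M e True = Some x \<and> endpt M e False = Some y
                              \<or> endpt M e True = Some y \<and> endpt M e False = Some x)"

definition connected_graph :: "('v, 'e) multipole \<Rightarrow> bool" where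
  "connected_graph M \<longleftrightarrow> verts M \<noteq> {} \<and>
     (\<forall>x\<in>verts M. \<forall>y\<in>verts M. (x, y) \<in> {(a, b). adj M a b}\<^sup>*)"

definition is_colouring :: "('v, 'e) multipole \<Rightarrow> ('e \<Rightarrow> colour) \<Rightarrow> bool" where
  "is_colouring M \<phi> \<longleftrightarrow> (\<forall>e\<in>edges M. \<phi> e \<in> KK) \<and>
     (\<forall>x\<in>verts M. inj_on (\<lambda>(e, b). \<phi> e) (ends_at M x))"

definition colourable :: "('v, 'e) multipole \<Rightarrow> bool" where
  "colourable M \<longleftrightarrow> (\<exists>\<phi>. is_colouring M \<phi>)"

definition snark :: "('v, 'e) multipole \<Rightarrow> bool" where
  "snark G \<longleftrightarrow> is_graph G \<and> connected_graph G \<and> \<not> colourable G"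

text \<open>Deleting a set of vertices: all edges are kept; ends at deleted vertices
become free (so an edge between two deleted vertices becomes an isolated edge).\<close>
definition del_verts :: "('v, 'e) multipole \<Rightarrow> 'v set \<Rightarrow> ('v, 'e) multipole" where
  "del_verts M S = \<lparr> verts = verts M - S, edges = edges M,
     endpt = (\<lambda>e b. case endpt M e b of None \<Rightarrow> None
                     | Some x \<Rightarrow> (if x \<in> S then None else Some x)) \<rparr>"

definition bicritical :: "('v, 'e) multipole \<Rightarrow> bool" where
  "bicritical G \<longleftrightarrow> snark G \<and>
     (\<forall>x\<in>verts G. \<forall>y\<in>verts G. x \<noteq> y \<longrightarrow> colourable (del_verts G {x, y}))"

definition girth_ge_5 :: "('v, 'e) multipole \<Rightarrow> bool" where
  "girth_ge_5 G \<longleftrightarrow>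
     (\<forall>e\<in>edges G. endpt G e True \<noteq> endpt G e False) \<and>
     (\<forall>e\<in>edges G. \<forall>f\<in>edges G. e \<noteq> f \<longrightarrow>
         {endpt G e True, endpt G e False} \<noteq> {endpt G f True, endpt G f False}) \<and>
     (\<forall>a b c. distinct [a, b, c] \<longrightarrow> \<not> (adj G a b \<and> adj G b c \<and> adj G c a)) \<and>
     (\<forall>a b c d. distinct [a, b, c, d] \<longrightarrow>
         \<not> (adj G a b \<and> adj G b c \<and> adj G c d \<and> adj G d a))"

text \<open>A negator is given by its host snark H, a path u w v in H and a labelling
of its semiedges: i1, i2 (formerly at u), o1, o2 (formerly at v), r (formerly at w).\<close>

record ('v, 'e) negator =
  host :: "('v, 'e) multipole"
  nu :: 'v
  nw :: 'v
  nv :: 'v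
  ni1 :: 'e
  ni2 :: 'e
  no1 :: 'e
  no2 :: 'e
  nr :: 'e

definition inside :: "('v, 'e) multipole \<Rightarrow> 'v set \<Rightarrow> 'e \<Rightarrow> bool" where
  "inside M S e \<longleftrightarrow> (\<forall>b. \<exists>x\<in>S. endpt M e b = Some x)"

text \<open>The multipole N = Neg(H;u,v): delete u, w, v (and the edges uw, wv between them).\<close>
definition neg_pole :: "('v, 'e) negator \<Rightarrow> ('v, 'e) multipole" where
  "neg_pole N = (let H = host N; S = {nu N, nw N, nv N}; D = del_verts H S in
     D\<lparr> edges := {e \<in> edges H. \<not> inside H S e} \<rparr>)"

definition is_negator :: "('v, 'e) negator \<Rightarrow> bool" where
  "is_negator N \<longleftrightarrow> (let H = host N; S = {nu N, nw N, nv N} in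
     snark H \<and> girth_ge_5 H \<and>
     nu N \<in> verts H \<and> nw N \<in> verts H \<and> nv N \<in> verts H \<and>
     distinct [nu N, nw N, nv N] \<and> adj H (nu N) (nw N) \<and> adj H (nw N) (nv N) \<and>
     ni1 N \<noteq> ni2 N \<and> no1 N \<noteq> no2 N \<and>
     {ni1 N, ni2 N} = {e. incident H e (nu N) \<and> \<not> inside H S e} \<and>
     {no1 N, no2 N} = {e. incident H e (nv N) \<and> \<not> inside H S e} \<and>
     {nr N} = {e. incident H e (nw N) \<and> \<not> inside H S e})"

definition tuple :: "('v, 'e) negator \<Rightarrow> ('e \<Rightarrow> colour) \<Rightarrow> colour \<times> colour \<times> colour \<times> colour \<times> colour" where
  "tuple N \<phi> = (\<phi> (ni1 N), \<phi> (ni2 N), \<phi> (no1 N), \<phi> (no2 N), \<phi> (nr N))"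

definition perfect :: "('v, 'e) negator \<Rightarrow> bool" where
  "perfect N \<longleftrightarrow>
     {tuple N \<phi> | \<phi>. is_colouring (neg_pole N) \<phi>} =
     {(z, z, a, b, a + b) | z a b. z \<in> KK \<and> a \<in> KK \<and> b \<in> KK \<and> a \<noteq> b} \<union>
     {(a, b, z, z, a + b) | z a b. z \<in> KK \<and> a \<in> KK \<and> b \<in> KK \<and> a \<noteq> b}"

definition feasible :: "('v, 'e) negator \<Rightarrow> bool" where
  "feasible N \<longleftrightarrow> (let H = host N; VN = verts (neg_pole N) in
     (\<forall>x\<in>VN. \<forall>y\<in>VN. x \<noteq> y \<longrightarrow> colourable (del_verts H {x, y})) \<and>
     (\<forall>x\<in>{nu N, nv N}. \<forall>y\<in>VN. \<forall>e f. e \<noteq> f \<and> incident H e x \<and> incident H f x \<longrightarrow>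
        (\<exists>\<phi>. is_colouring (del_verts H {x, y}) \<phi> \<and> \<phi> e = \<phi> f)) \<and>
     (\<forall>y\<in>VN. \<exists>\<phi> \<psi> a b. a \<in> KK \<and> b \<in> KK \<and> a \<noteq> b \<and>
        is_colouring (del_verts (neg_pole N) {y}) \<phi> \<and> tuple N \<phi> = (a, a, b, b, a) \<and>
        is_colouring (del_verts (neg_pole N) {y}) \<psi> \<and> tuple N \<psi> = (a, a, b, b, b)))"

text \<open>Disjoint union of three multipoles; the new vertex will be None.\<close>
definition union3 :: "('v1, 'e1) multipole \<Rightarrow> ('v2, 'e2) multipole \<Rightarrow> ('v3, 'e3) multipole
    \<Rightarrow> (('v1 + 'v2 + 'v3) option, 'e1 + 'e2 + 'e3) multipole" where
  "union3 M1 M2 M3 = \<lparr>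
     verts = (Some \<circ> Inl) ` verts M1 \<union> (Some \<circ> Inr \<circ> Inl) ` verts M2 \<union> (Some \<circ> Inr \<circ> Inr) ` verts M3,
     edges = Inl ` edges M1 \<union> (Inr \<circ> Inl) ` edges M2 \<union> (Inr \<circ> Inr) ` edges M3,
     endpt = (\<lambda>d c. case d of
         Inl e \<Rightarrow> map_option (Some \<circ> Inl) (endpt M1 e c)
       | Inr (Inl e) \<Rightarrow> map_option (Some \<circ> Inr \<circ> Inl) (endpt M2 e c)
       | Inr (Inr e) \<Rightarrow> map_option (Some \<circ> Inr \<circ> Inr) (endpt M3 e c)) \<rparr>"

definition vend :: "('v, 'e) multipole \<Rightarrow> 'e \<Rightarrow> 'v option" where
  "vend M f = (if endpt M f True = None then endpt M f False else endpt M f True)"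

text \<open>Junction of two dangling edges e and f: they are merged into a single edge
(kept under the name e) joining their vertex ends.\<close>
definition junction :: "('v, 'e) multipole \<Rightarrow> 'e \<Rightarrow> 'e \<Rightarrow> ('v, 'e) multipole" where
  "junction M e f = \<lparr> verts = verts M, edges = edges M - {f},
     endpt = (\<lambda>d c. if d = e \<and> endpt M e c = None then vend M f else endpt M d c) \<rparr>"

definition add_vertex :: "('v, 'e) multipole \<Rightarrow> 'v \<Rightarrow> 'e set \<Rightarrow> ('v, 'e) multipole" where
  "add_vertex M x R = \<lparr> verts = insert x (verts M), edges = edges M,
     endpt = (\<lambda>d c. if d \<in> R \<and> endpt M d c = None then Some x else endpt M d c) \<rparr>"

text \<open>NNN(N1,N2,N3): junction of O1 with I2, O2 with I3, O3 with I1 (the bijections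
being given by the labellings: o_{j,k} is joined with i_{j+1,k}), plus a new vertex
incident with r1, r2, r3.\<close>
definition NNN :: "('v1, 'e1) negator \<Rightarrow> ('v2, 'e2) negator \<Rightarrow> ('v3, 'e3) negator
    \<Rightarrow> (('v1 + 'v2 + 'v3) option, 'e1 + 'e2 + 'e3) multipole" where
  "NNN N1 N2 N3 = (let
     U = union3 (neg_pole N1) (neg_pole N2) (neg_pole N3);
     e1 = (\<lambda>x. Inl x); e2 = (\<lambda>x. Inr (Inl x)); e3 = (\<lambda>x. Inr (Inr x));
     J = junction (junction (junction (junction (junction (junction U
            (e1 (no1 N1)) (e2 (ni1 N2)))
            (e1 (no2 N1)) (e2 (ni2 N2)))
            (e2 (no1 N2)) (e3 (ni1 N3)))
            (e2 (no2 N2)) (e3 (ni2 N3)))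
            (e3 (no1 N3)) (e1 (ni1 N1)))
            (e3 (no2 N3)) (e1 (ni2 N1))
   in add_vertex J None {e1 (nr N1), e2 (nr N2), e3 (nr N3)})"

end

theory Submission
  imports Defs
begin

lemma KK_cases: "x \<in> KK \<longleftrightarrow> x = (0,1) \<or> x = (1,0) \<or> x = (1,1)"
  by (simp add: KK_def)
lemma colour_cases: fixes x :: colour obtains "x = (0,0)" | "x = (0,1)" | "x = (1,0)" | "x = (1,1)"
  by (metis bit.exhaust prod.collapse)
lemma third: "a \<in> KK \<Longrightarrow> b \<in> KK \<Longrightarrow> c \<in> KK \<Longrightarrow> a \<noteq> b \<Longrightarrow> a \<noteq> c \<Longrightarrow> b \<noteq> c \<Longrightarrow> c = a + b"
  unfolding KK_cases by (auto simp: zero_prod_def)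
lemma sumKK: "a \<in> KK \<Longrightarrow> b \<in> KK \<Longrightarrow> a \<noteq> b \<Longrightarrow> a + b \<in> KK \<and> a + b \<noteq> a \<and> a + b \<noteq> b"
  unfolding KK_cases by (auto simp: zero_prod_def)


definition col :: "('v,'e) multipole \<Rightarrow> 'v set \<Rightarrow> ('e \<Rightarrow> colour) \<Rightarrow> bool" where
 "col M D \<phi> \<longleftrightarrow> (\<forall>e\<in>edges M. \<phi> e \<in> KK) \<and>
     (\<forall>x\<in>verts M. x \<notin> D \<longrightarrow> inj_on (\<lambda>(e,b). \<phi> e) (ends_at M x))"

lemma ends_at_del: "x \<notin> D \<Longrightarrow> ends_at (del_verts M D) x = ends_at M x"
  by (auto simp: ends_at_def del_verts_def split: option.splits if_splits)

lemma del_verts_simps: "verts (del_verts M D) = verts M - D" "edges (del_verts M D) = edges M"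
  by (auto simp: del_verts_def)

lemma col_del: "is_colouring (del_verts M D) \<phi> \<longleftrightarrow> col M D \<phi>"
  unfolding is_colouring_def col_def del_verts_simps by (auto simp: ends_at_del)

lemma col_empty: "is_colouring M \<phi> \<longleftrightarrow> col M {} \<phi>"
  by (auto simp: is_colouring_def col_def)

lemma col_mono: "col M D \<phi> \<Longrightarrow> (\<And>x. x\<in>verts M \<Longrightarrow> x \<in> D \<Longrightarrow> x \<in> D') \<Longrightarrow> col M D' \<phi>"
  by (auto simp: col_def)

lemma col_neq: assumes "col M D \<phi>" "x \<in> verts M" "x \<notin> D" "incident M e x" "incident M f x" "e \<noteq> f"
  shows "\<phi> e \<noteq> \<phi> f"
proof
  assume eq: "\<phi> e = \<phi> f"
  obtain b b' where "(e,b) \<in> ends_at M x" "(f,b') \<in> ends_at M x"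
    using assms(4,5) by (auto simp: incident_def ends_at_def)
  moreover have "inj_on (\<lambda>(e,b). \<phi> e) (ends_at M x)" using assms(1-3) by (auto simp: col_def)
  ultimately have "(e,b) = (f,b')" using eq inj_onD[of "\<lambda>(e,b). \<phi> e" "ends_at M x" "(e,b)" "(f,b')"] by auto
  then show False using assms(6) by simp
qed

lemma col_perm: assumes "col M D \<phi>" "inj_on \<sigma> KK" "\<sigma> ` KK \<subseteq> KK"
  shows "col M D (\<sigma> \<circ> \<phi>)"
proof -
  have "inj_on (\<lambda>(e,b). (\<sigma> \<circ> \<phi>) e) (ends_at M x)" if "x \<in> verts M" "x \<notin> D" for x
  proof -
    have i: "inj_on (\<lambda>(e,b). \<phi> e) (ends_at M x)" using assms(1) that by (auto simp: col_def)
    have s: "(\<lambda>(e,b). \<phi> e) ` ends_at M x \<subseteq> KK" using assms(1) by (auto simp: col_def ends_at_def)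
    show ?thesis
    proof (rule inj_onI)
      fix p q assume pq: "p \<in> ends_at M x" "q \<in> ends_at M x"
        "(\<lambda>(e,b). (\<sigma> \<circ> \<phi>) e) p = (\<lambda>(e,b). (\<sigma> \<circ> \<phi>) e) q"
      have "(\<lambda>(e,b). \<phi> e) p \<in> KK" "(\<lambda>(e,b). \<phi> e) q \<in> KK" using s pq(1,2) by auto
      moreover have "\<sigma> ((\<lambda>(e,b). \<phi> e) p) = \<sigma> ((\<lambda>(e,b). \<phi> e) q)" using pq(3)
        by (cases p; cases q) auto
      ultimately have "(\<lambda>(e,b). \<phi> e) p = (\<lambda>(e,b). \<phi> e) q" using assms(2) by (auto dest: inj_onD)
      then show "p = q" using i pq(1,2) by (auto dest: inj_onD)
    qed
  qed
  then show ?thesis using assms by (auto simp: col_def)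
qed

definition dang :: "('v,'e) multipole \<Rightarrow> 'e \<Rightarrow> bool" where
  "dang M d \<longleftrightarrow> d \<in> edges M \<and> (\<exists>c. endpt M d c = None \<and> endpt M d (\<not>c) \<noteq> None)"

definition opn :: "('v,'e) multipole \<Rightarrow> 'e set" where
  "opn M = {d \<in> edges M. \<exists>c. endpt M d c = None}"

lemma dang_None_iff: "endpt M d c0 = None \<Longrightarrow> endpt M d (\<not>c0) \<noteq> None \<Longrightarrow> endpt M d c = None \<longleftrightarrow> c = c0"
  by (cases c; cases c0) auto

lemma junction_simps:
  "verts (junction M e f) = verts M" "edges (junction M e f) = edges M - {f}"
  "d \<noteq> e \<Longrightarrow> endpt (junction M e f) d = endpt M d"
  by (auto simp: junction_def)

lemma junction_dang: "d \<noteq> e \<Longrightarrow> d \<noteq> f \<Longrightarrow> dang (junction M e f) d = dang M d"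
  by (auto simp: dang_def junction_simps)

locale junc =
  fixes M :: "('v,'e) multipole" and e f :: 'e and c0 cf :: bool
  assumes e_in: "e \<in> edges M" and f_in: "f \<in> edges M" and ef: "e \<noteq> f"
   and e0: "endpt M e c0 = None" and e1: "endpt M e (\<not>c0) \<noteq> None"
   and f0: "endpt M f cf = None" and f1: "endpt M f (\<not>cf) \<noteq> None"
begin

abbreviation "J \<equiv> junction M e f"

lemma vend_f: "vend M f = endpt M f (\<not>cf)"
  using f0 f1 by (cases cf) (auto simp: vend_def)

lemma endpt_J: "endpt J d c = (if d = e \<and> c = c0 then endpt M f (\<not>cf) else endpt M d c)"
  using dang_None_iff[of M e c0 c, OF e0 e1] by (auto simp: junction_def vend_f)

definition g :: "'e \<times> bool \<Rightarrow> 'e \<times> bool" where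
  "g = (\<lambda>(d,b). if d = f then (e, c0) else (d,b))"

lemma e_end: "endpt M e c \<noteq> None \<Longrightarrow> c = (\<not>c0)"
  using e0 by (cases c; cases c0) auto

lemma f_end: "(f, b) \<in> ends_at M x \<Longrightarrow> b = (\<not>cf)"
  using f0 by (cases b; cases cf) (auto simp: ends_at_def)

lemma bij_g: "bij_betw g (ends_at M x) (ends_at J x)"
proof -
  have inj: "inj_on g (ends_at M x)"
  proof (rule inj_onI)
    fix p q assume pq: "p \<in> ends_at M x" "q \<in> ends_at M x" "g p = g q"
    have ne: "(e, c0) \<notin> ends_at M x" using e0 by (auto simp: ends_at_def)
    obtain d b d' b' where pq': "p = (d,b)" "q = (d',b')" by fastforce
    show "p = q"
    proof (cases "d = f")
      case True
      then show ?thesis using pq pq' f_end ne by (cases "d' = f") (auto simp: g_def)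
    next
      case False
      then show ?thesis using pq pq' f_end ne by (cases "d' = f") (auto simp: g_def)
    qed
  qed
  have "g ` ends_at M x = ends_at J x"
  proof
    show "g ` ends_at M x \<subseteq> ends_at J x"
    proof
      fix q assume "q \<in> g ` ends_at M x"
      then obtain d b where db: "(d,b) \<in> ends_at M x" "q = g (d,b)" by auto
      show "q \<in> ends_at J x"
      proof (cases "d = f")
        case True
        then have "b = (\<not>cf)" using db f_end by simp
        then show ?thesis using True db ef e_in by (auto simp: g_def ends_at_def endpt_J junction_simps)
      next
        case False
        have "\<not> (d = e \<and> b = c0)"
        proof
          assume "d = e \<and> b = c0"
          then have "endpt M d b = None" using e0 by simp
          then show False using db by (simp add: ends_at_def)
        qed
        then show ?thesis using False db by (auto simp: g_def ends_at_def endpt_J junction_simps)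
      qed
    qed
    show "ends_at J x \<subseteq> g ` ends_at M x"
    proof
      fix p assume p: "p \<in> ends_at J x"
      obtain d c where pdc: "p = (d,c)" by fastforce
      show "p \<in> g ` ends_at M x"
      proof (cases "d = e \<and> c = c0")
        case True
        then have "(f, \<not>cf) \<in> ends_at M x" "g (f, \<not>cf) = p"
          using p pdc f_in by (auto simp: ends_at_def endpt_J g_def)
        then show ?thesis by blast
      next
        case False
        then have "(d, c) \<in> ends_at M x" "g (d,c) = p"
          using p pdc by (auto simp: ends_at_def endpt_J g_def junction_simps)
        then show ?thesis by blast
      qed
    qed
  qed
  with inj show ?thesis by (simp add: bij_betw_def)
qed

lemma col_J: "col J D \<phi> \<longleftrightarrow> col M D (\<phi>(f := \<phi> e))"
proof -
  have v: "inj_on (\<lambda>(d,b). \<phi> d) (ends_at J x) \<longleftrightarrow> inj_on (\<lambda>(d,b). (\<phi>(f := \<phi> e)) d) (ends_at M x)" for x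
  proof -
    have "inj_on (\<lambda>(d,b). \<phi> d) (ends_at J x) \<longleftrightarrow> inj_on ((\<lambda>(d,b). \<phi> d) \<circ> g) (ends_at M x)"
      using bij_g[of x] comp_inj_on_iff[of g "ends_at M x" "\<lambda>(d,b). \<phi> d"]
      by (simp add: bij_betw_def)
    moreover have "(\<lambda>(d,b). \<phi> d) \<circ> g = (\<lambda>(d,b). (\<phi>(f := \<phi> e)) d)"
      by (auto simp: g_def)
    ultimately show ?thesis by simp
  qed
  have ed: "(\<forall>d\<in>edges J. \<phi> d \<in> KK) \<longleftrightarrow> (\<forall>d\<in>edges M. (\<phi>(f := \<phi> e)) d \<in> KK)"
    using e_in ef by (auto simp: junction_simps)
  show ?thesis unfolding col_def using v ed by (simp add: junction_simps)
qed

lemma mp_J: "is_multipole M \<Longrightarrow> is_multipole J"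
proof -
  assume m: "is_multipole M"
  have "card (ends_at J x) = card (ends_at M x)" for x
    using bij_g[of x] by (simp add: bij_betw_same_card)
  moreover have "endpt M f (\<not>cf) = None \<or> the (endpt M f (\<not>cf)) \<in> verts M" using m f_in
    by (auto simp: is_multipole_def)
  ultimately show ?thesis using m
    by (auto simp: is_multipole_def junction_simps endpt_J)
qed

lemma opn_J: "opn J = opn M - {e,f}"
proof -
  have a: "endpt J e c \<noteq> None" for c
    using e1 f1 by (auto simp: endpt_J)
  have b: "d \<noteq> e \<Longrightarrow> endpt J d c = endpt M d c" for d c by (simp add: junction_simps)
  show ?thesis unfolding opn_def junction_simps
  proof (intro set_eqI iffI)
    fix d assume "d \<in> {d \<in> edges M - {f}. \<exists>c. endpt J d c = None}"
    then show "d \<in> {d \<in> edges M. \<exists>c. endpt M d c = None} - {e, f}" using a b by (cases "d = e") auto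
  next
    fix d assume "d \<in> {d \<in> edges M. \<exists>c. endpt M d c = None} - {e, f}"
    then show "d \<in> {d \<in> edges M - {f}. \<exists>c. endpt J d c = None}" using b by auto
  qed
qed

end

lemma dang_junc: assumes "dang M e" "dang M f" "e \<noteq> f"
  obtains c0 cf where "junc M e f c0 cf"
  using assms unfolding dang_def junc_def by blast

lemma col_junction: "dang M e \<Longrightarrow> dang M f \<Longrightarrow> e \<noteq> f \<Longrightarrow> col (junction M e f) D \<phi> \<longleftrightarrow> col M D (\<phi>(f := \<phi> e))"
  by (metis dang_junc junc.col_J)
lemma mp_junction: "dang M e \<Longrightarrow> dang M f \<Longrightarrow> e \<noteq> f \<Longrightarrow> is_multipole M \<Longrightarrow> is_multipole (junction M e f)"
  by (metis dang_junc junc.mp_J)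
lemma opn_junction: "dang M e \<Longrightarrow> dang M f \<Longrightarrow> e \<noteq> f \<Longrightarrow> opn (junction M e f) = opn M - {e,f}"
  by (metis dang_junc junc.opn_J)


lemma add_vertex_simps:
  "verts (add_vertex M z R) = insert z (verts M)" "edges (add_vertex M z R) = edges M"
  "endpt (add_vertex M z R) d c = (if d \<in> R \<and> endpt M d c = None then Some z else endpt M d c)"
  by (auto simp: add_vertex_def)

locale addv =
  fixes M :: "('v,'e) multipole" and z :: 'v and r1 r2 r3 :: 'e and c1 c2 c3 :: bool
  assumes mp: "is_multipole M" and z: "z \<notin> verts M" and dr: "distinct [r1,r2,r3]"
   and r_in: "r1 \<in> edges M" "r2 \<in> edges M" "r3 \<in> edges M"
   and r0: "endpt M r1 c1 = None" "endpt M r2 c2 = None" "endpt M r3 c3 = None"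
   and r1': "endpt M r1 (\<not>c1) \<noteq> None" "endpt M r2 (\<not>c2) \<noteq> None" "endpt M r3 (\<not>c3) \<noteq> None"
begin

abbreviation "A \<equiv> add_vertex M z {r1,r2,r3}"

lemma noz: "endpt M d c \<noteq> Some z" if "d \<in> edges M" for d c
proof
  assume "endpt M d c = Some z"
  moreover have "endpt M d c = None \<or> the (endpt M d c) \<in> verts M" using mp that by (auto simp: is_multipole_def)
  ultimately show False using z by auto
qed

lemma ends_other: "x \<noteq> z \<Longrightarrow> ends_at A x = ends_at M x"
  by (auto simp: ends_at_def add_vertex_simps)

lemma rN: "endpt M r1 c = None \<longleftrightarrow> c = c1" "endpt M r2 c = None \<longleftrightarrow> c = c2" "endpt M r3 c = None \<longleftrightarrow> c = c3"
  using dang_None_iff[of M r1 c1 c, OF r0(1) r1'(1)] dang_None_iff[of M r2 c2 c, OF r0(2) r1'(2)]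
        dang_None_iff[of M r3 c3 c, OF r0(3) r1'(3)] by auto

lemma ends_z: "ends_at A z = {(r1,c1),(r2,c2),(r3,c3)}"
proof -
  have hh: "(d,c) \<in> ends_at A z \<longleftrightarrow> d \<in> edges M \<and> d \<in> {r1,r2,r3} \<and> endpt M d c = None" for d c
    using noz by (auto simp: ends_at_def add_vertex_simps)
  have "(d,c) \<in> ends_at A z \<longleftrightarrow> (d,c) \<in> {(r1,c1),(r2,c2),(r3,c3)}" for d c
  proof (rule iffI)
    assume "(d,c) \<in> ends_at A z"
    then have h: "d \<in> {r1,r2,r3}" "endpt M d c = None" using hh by blast+
    show "(d,c) \<in> {(r1,c1),(r2,c2),(r3,c3)}"
    proof (cases "d = r1")
      case True then show ?thesis using h rN(1) by simp
    next
      case F1: False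
      show ?thesis
      proof (cases "d = r2")
        case True then show ?thesis using h rN(2) by simp
      next
        case False then show ?thesis using F1 h rN(3) by simp
      qed
    qed
  next
    assume "(d,c) \<in> {(r1,c1),(r2,c2),(r3,c3)}"
    then show "(d,c) \<in> ends_at A z" using hh r_in r0 by auto
  qed
  then show ?thesis by (simp add: set_eq_iff)
qed

lemma col_A: "col A D \<phi> \<longleftrightarrow> col M D \<phi> \<and> (z \<notin> D \<longrightarrow> \<phi> r1 \<noteq> \<phi> r2 \<and> \<phi> r1 \<noteq> \<phi> r3 \<and> \<phi> r2 \<noteq> \<phi> r3)"
proof -
  have a: "inj_on (\<lambda>(e,b). \<phi> e) (ends_at A z) \<longleftrightarrow> \<phi> r1 \<noteq> \<phi> r2 \<and> \<phi> r1 \<noteq> \<phi> r3 \<and> \<phi> r2 \<noteq> \<phi> r3"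
    using dr unfolding ends_z by (auto simp add: inj_on_insert)
  have b: "(\<forall>x\<in>insert z (verts M). x \<notin> D \<longrightarrow> inj_on (\<lambda>(e,b). \<phi> e) (ends_at A x)) \<longleftrightarrow>
      (\<forall>x\<in>verts M. x \<notin> D \<longrightarrow> inj_on (\<lambda>(e,b). \<phi> e) (ends_at M x)) \<and>
      (z \<notin> D \<longrightarrow> inj_on (\<lambda>(e,b). \<phi> e) (ends_at A z))"
    using z ends_other unfolding add_vertex_simps by (metis insert_iff)
  show ?thesis unfolding col_def add_vertex_simps b a by blast
qed

lemma mp_A: "is_multipole A"
proof -
  have "card (ends_at A z) = 3" using dr by (simp add: ends_z)
  moreover have "\<forall>x\<in>verts M. card (ends_at A x) = 3"
  proof
    fix x assume x: "x \<in> verts M"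
    then have "x \<noteq> z" using z by auto
    then show "card (ends_at A x) = 3" using ends_other x mp unfolding is_multipole_def by auto
  qed
  moreover have "\<forall>e\<in>edges M. \<forall>b. endpt A e b = None \<or> the (endpt A e b) \<in> insert z (verts M)"
  proof (intro ballI allI)
    fix e b assume "e \<in> edges M"
    then have "endpt M e b = None \<or> the (endpt M e b) \<in> verts M" using mp by (auto simp: is_multipole_def)
    then show "endpt A e b = None \<or> the (endpt A e b) \<in> insert z (verts M)" by (auto simp: add_vertex_simps)
  qed
  ultimately show ?thesis using mp
    unfolding is_multipole_def add_vertex_simps by auto
qed

lemma opn_A: "opn A = opn M - {r1,r2,r3}"
  by (auto simp: opn_def add_vertex_simps)
end


lemma union3_simps:
  "verts (union3 M1 M2 M3) = (Some \<circ> Inl) ` verts M1 \<union> (Some \<circ> Inr \<circ> Inl) ` verts M2 \<union> (Some \<circ> Inr \<circ> Inr) ` verts M3"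
  "edges (union3 M1 M2 M3) = Inl ` edges M1 \<union> (Inr \<circ> Inl) ` edges M2 \<union> (Inr \<circ> Inr) ` edges M3"
  "endpt (union3 M1 M2 M3) (Inl e) c = map_option (Some \<circ> Inl) (endpt M1 e c)"
  "endpt (union3 M1 M2 M3) (Inr (Inl e')) c = map_option (Some \<circ> Inr \<circ> Inl) (endpt M2 e' c)"
  "endpt (union3 M1 M2 M3) (Inr (Inr e'')) c = map_option (Some \<circ> Inr \<circ> Inr) (endpt M3 e'' c)"
  by (auto simp: union3_def)

lemma ends_U_mem:
  "(Inl e, c) \<in> ends_at (union3 M1 M2 M3) (Some (Inl x)) \<longleftrightarrow> (e,c) \<in> ends_at M1 x"
  "(Inr f, c) \<notin> ends_at (union3 M1 M2 M3) (Some (Inl x))"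
  "(Inr (Inl e'), c) \<in> ends_at (union3 M1 M2 M3) (Some (Inr (Inl x'))) \<longleftrightarrow> (e',c) \<in> ends_at M2 x'"
  "(Inl g, c) \<notin> ends_at (union3 M1 M2 M3) (Some (Inr (Inl x')))"
  "(Inr (Inr g'), c) \<notin> ends_at (union3 M1 M2 M3) (Some (Inr (Inl x')))"
  "(Inr (Inr e''), c) \<in> ends_at (union3 M1 M2 M3) (Some (Inr (Inr x''))) \<longleftrightarrow> (e'',c) \<in> ends_at M3 x''"
  "(Inl g, c) \<notin> ends_at (union3 M1 M2 M3) (Some (Inr (Inr x'')))"
  "(Inr (Inl g''), c) \<notin> ends_at (union3 M1 M2 M3) (Some (Inr (Inr x'')))"
  "(d, c) \<notin> ends_at (union3 M1 M2 M3) None"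
  unfolding ends_at_def union3_simps
  by (auto simp: union3_def split: sum.splits)

lemma sum3_cases: obtains e where "d = Inl e" | e where "d = Inr (Inl e)" | e where "d = Inr (Inr e)"
  by (metis sum.exhaust)

lemma img_pair_mem: assumes "inj k" shows "((k e, c) \<in> (\<lambda>(e,b). (k e, b)) ` A) = ((e,c) \<in> A)"
proof
  assume "(k e, c) \<in> (\<lambda>(e,b). (k e, b)) ` A"
  then obtain e' c' where "(e',c') \<in> A" "(k e, c) = (k e', c')" by auto
  then show "(e,c) \<in> A" using assms by (auto simp: inj_eq)
next
  assume "(e,c) \<in> A"
  then show "(k e, c) \<in> (\<lambda>(e,b). (k e, b)) ` A" by (rule rev_image_eqI) simp
qed

lemma img_pair_mem':
  "(Inl e, c) \<in> (\<lambda>(e,b). (Inl e, b)) ` A \<longleftrightarrow> (e,c) \<in> A"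
  "(Inr (Inl e), c) \<in> (\<lambda>(e,b). (Inr (Inl e), b)) ` A' \<longleftrightarrow> (e,c) \<in> A'"
  "(Inr (Inr e), c) \<in> (\<lambda>(e,b). (Inr (Inr e), b)) ` A'' \<longleftrightarrow> (e,c) \<in> A''"
  using img_pair_mem[of Inl e c A] img_pair_mem[of "Inr \<circ> Inl" e c A'] img_pair_mem[of "Inr \<circ> Inr" e c A'']
  by (auto simp: inj_def)

lemma ends_U1: "ends_at (union3 M1 M2 M3) (Some (Inl x)) = (\<lambda>(e,b). (Inl e, b)) ` ends_at M1 x"
proof (rule set_eqI)
  fix p :: "('a + 'b + 'c) \<times> bool"
  obtain d c where p: "p = (d,c)" by fastforce
  show "p \<in> ends_at (union3 M1 M2 M3) (Some (Inl x)) \<longleftrightarrow> p \<in> (\<lambda>(e,b). (Inl e, b)) ` ends_at M1 x"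
    unfolding p by (cases d rule: sum3_cases) (auto simp: ends_U_mem img_pair_mem')
qed
lemma ends_U2: "ends_at (union3 M1 M2 M3) (Some (Inr (Inl x))) = (\<lambda>(e,b). (Inr (Inl e), b)) ` ends_at M2 x"
proof (rule set_eqI)
  fix p :: "('a + 'b + 'c) \<times> bool"
  obtain d c where p: "p = (d,c)" by fastforce
  show "p \<in> ends_at (union3 M1 M2 M3) (Some (Inr (Inl x))) \<longleftrightarrow> p \<in> (\<lambda>(e,b). (Inr (Inl e), b)) ` ends_at M2 x"
    unfolding p by (cases d rule: sum3_cases) (auto simp: ends_U_mem img_pair_mem')
qed
lemma ends_U3: "ends_at (union3 M1 M2 M3) (Some (Inr (Inr x))) = (\<lambda>(e,b). (Inr (Inr e), b)) ` ends_at M3 x"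
proof (rule set_eqI)
  fix p :: "('a + 'b + 'c) \<times> bool"
  obtain d c where p: "p = (d,c)" by fastforce
  show "p \<in> ends_at (union3 M1 M2 M3) (Some (Inr (Inr x))) \<longleftrightarrow> p \<in> (\<lambda>(e,b). (Inr (Inr e), b)) ` ends_at M3 x"
    unfolding p by (cases d rule: sum3_cases) (auto simp: ends_U_mem img_pair_mem')
qed

lemma inj_pair: assumes "inj k" shows "inj_on (\<lambda>(e,b). (k e, b)) A"
proof (rule inj_onI)
  fix p q assume "(\<lambda>(e,b). (k e, b)) p = (\<lambda>(e,b). (k e, b)) q"
  then show "p = q" using assms by (cases p; cases q) (simp add: inj_eq)
qed

lemma inj_img: assumes "inj k"
  shows "inj_on (\<lambda>(e,b). \<phi> e) ((\<lambda>(e,b). (k e, b)) ` A) \<longleftrightarrow> inj_on (\<lambda>(e,b). (\<phi> \<circ> k) e) A"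
proof -
  have i: "inj_on (\<lambda>(e,b). (k e, b)) A" using assms by (rule inj_pair)
  have eq: "(\<lambda>(e,b). \<phi> e) \<circ> (\<lambda>(e,b). (k e, b)) = (\<lambda>(e,b). (\<phi> \<circ> k) e)" by (auto simp: fun_eq_iff)
  have 1: "inj_on (\<lambda>(e,b). \<phi> e) ((\<lambda>(e,b). (k e, b)) ` A) = inj_on ((\<lambda>(e,b). \<phi> e) \<circ> (\<lambda>(e,b). (k e, b))) A"
    using comp_inj_on_iff[OF i, of "\<lambda>(e,b). \<phi> e"] by simp
  show ?thesis using 1 unfolding eq .
qed

lemma card_img: "inj k \<Longrightarrow> card ((\<lambda>(e,b). (k e, b)) ` A) = card A"
  by (rule card_image) (rule inj_pair)

lemma inj_img3:
  "inj_on (\<lambda>(e,b). \<phi> e) ((\<lambda>(e,b). (Inl e, b)) ` A) \<longleftrightarrow> inj_on (\<lambda>(e,b). (\<phi> \<circ> Inl) e) A"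
  "inj_on (\<lambda>(e,b). \<phi> e) ((\<lambda>(e,b). (Inr (Inl e), b)) ` A') \<longleftrightarrow> inj_on (\<lambda>(e,b). (\<phi> \<circ> Inr \<circ> Inl) e) A'"
  "inj_on (\<lambda>(e,b). \<phi> e) ((\<lambda>(e,b). (Inr (Inr e), b)) ` A'') \<longleftrightarrow> inj_on (\<lambda>(e,b). (\<phi> \<circ> Inr \<circ> Inr) e) A''"
  using inj_img[of Inl \<phi> A] inj_img[of "\<lambda>e. Inr (Inl e)" \<phi> A'] inj_img[of "\<lambda>e. Inr (Inr e)" \<phi> A'']
  by (simp_all add: comp_def inj_def)

lemma col_U: "col (union3 M1 M2 M3) D \<phi> \<longleftrightarrow>
   col M1 {x. Some (Inl x) \<in> D} (\<phi> \<circ> Inl) \<and> col M2 {x. Some (Inr (Inl x)) \<in> D} (\<phi> \<circ> Inr \<circ> Inl) \<and>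
   col M3 {x. Some (Inr (Inr x)) \<in> D} (\<phi> \<circ> Inr \<circ> Inr)"
proof -
  have E: "(\<forall>e\<in>edges (union3 M1 M2 M3). \<phi> e \<in> KK) \<longleftrightarrow>
     (\<forall>e\<in>edges M1. (\<phi> \<circ> Inl) e \<in> KK) \<and> (\<forall>e\<in>edges M2. (\<phi> \<circ> Inr \<circ> Inl) e \<in> KK) \<and>
     (\<forall>e\<in>edges M3. (\<phi> \<circ> Inr \<circ> Inr) e \<in> KK)"
    unfolding union3_simps by auto
  have V: "(\<forall>x\<in>verts (union3 M1 M2 M3). x \<notin> D \<longrightarrow> inj_on (\<lambda>(e,b). \<phi> e) (ends_at (union3 M1 M2 M3) x)) \<longleftrightarrow>
     (\<forall>x\<in>verts M1. x \<notin> {x. Some (Inl x) \<in> D} \<longrightarrow> inj_on (\<lambda>(e,b). (\<phi> \<circ> Inl) e) (ends_at M1 x)) \<and>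
     (\<forall>x\<in>verts M2. x \<notin> {x. Some (Inr (Inl x)) \<in> D} \<longrightarrow> inj_on (\<lambda>(e,b). (\<phi> \<circ> Inr \<circ> Inl) e) (ends_at M2 x)) \<and>
     (\<forall>x\<in>verts M3. x \<notin> {x. Some (Inr (Inr x)) \<in> D} \<longrightarrow> inj_on (\<lambda>(e,b). (\<phi> \<circ> Inr \<circ> Inr) e) (ends_at M3 x))"
    unfolding union3_simps ball_Un Ball_image_comp by (simp add: ends_U1 ends_U2 ends_U3 inj_img3 comp_def)
  show ?thesis unfolding col_def E V by blast
qed

lemma mp_U: "is_multipole M1 \<Longrightarrow> is_multipole M2 \<Longrightarrow> is_multipole M3 \<Longrightarrow> is_multipole (union3 M1 M2 M3)"
proof -
  assume m: "is_multipole M1" "is_multipole M2" "is_multipole M3"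
  have i1: "inj (Inl :: 'a \<Rightarrow> 'a + 'b + 'c)" "inj (\<lambda>e. Inr (Inl e) :: 'a + 'b + 'c)" "inj (\<lambda>e. Inr (Inr e) :: 'a + 'b + 'c)"
    by (auto simp: inj_def)
  have ci: "card ((\<lambda>(e,b). (Inl e, b)) ` A) = card A"
     "card ((\<lambda>(e,b). (Inr (Inl e), b)) ` A') = card A'"
     "card ((\<lambda>(e,b). (Inr (Inr e), b)) ` A'') = card A''" for A A' A''
    by (rule card_img; auto simp: inj_def)+
  have c: "\<forall>x\<in>verts (union3 M1 M2 M3). card (ends_at (union3 M1 M2 M3) x) = 3"
    unfolding union3_simps ball_Un Ball_image_comp
    using m by (simp add: comp_def ends_U1 ends_U2 ends_U3 is_multipole_def ci)
  have e: "\<forall>d\<in>edges (union3 M1 M2 M3). \<forall>b. endpt (union3 M1 M2 M3) d b = None \<or> the (endpt (union3 M1 M2 M3) d b) \<in> verts (union3 M1 M2 M3)"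
  proof (intro ballI allI)
    fix d b assume "d \<in> edges (union3 M1 M2 M3)"
    then consider e where "d = Inl e" "e \<in> edges M1" | e where "d = Inr (Inl e)" "e \<in> edges M2"
      | e where "d = Inr (Inr e)" "e \<in> edges M3" unfolding union3_simps by auto
    then show "endpt (union3 M1 M2 M3) d b = None \<or> the (endpt (union3 M1 M2 M3) d b) \<in> verts (union3 M1 M2 M3)"
    proof cases
      case 1
      then have "endpt M1 e b = None \<or> the (endpt M1 e b) \<in> verts M1" using m(1) by (auto simp: is_multipole_def)
      then show ?thesis using 1 by (cases "endpt M1 e b") (auto simp: union3_simps)
    next
      case 2
      then have "endpt M2 e b = None \<or> the (endpt M2 e b) \<in> verts M2" using m(2) by (auto simp: is_multipole_def)
      then show ?thesis using 2 by (cases "endpt M2 e b") (auto simp: union3_simps)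
    next
      case 3
      then have "endpt M3 e b = None \<or> the (endpt M3 e b) \<in> verts M3" using m(3) by (auto simp: is_multipole_def)
      then show ?thesis using 3 by (cases "endpt M3 e b") (auto simp: union3_simps)
    qed
  qed
  have f: "finite (verts (union3 M1 M2 M3))" "finite (edges (union3 M1 M2 M3))"
    using m unfolding union3_simps is_multipole_def by auto
  show ?thesis using c e f unfolding is_multipole_def by blast
qed

lemma opn_U: "opn (union3 M1 M2 M3) = Inl ` opn M1 \<union> (Inr \<circ> Inl) ` opn M2 \<union> (Inr \<circ> Inr) ` opn M3"
proof (rule set_eqI)
  fix d :: "'a + 'b + 'c"
  show "d \<in> opn (union3 M1 M2 M3) \<longleftrightarrow> d \<in> Inl ` opn M1 \<union> (Inr \<circ> Inl) ` opn M2 \<union> (Inr \<circ> Inr) ` opn M3"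
    by (cases d rule: sum3_cases) (auto simp: opn_def union3_simps)
qed

lemma dang_U:
  "dang (union3 M1 M2 M3) (Inl d) = dang M1 d"
  "dang (union3 M1 M2 M3) (Inr (Inl d')) = dang M2 d'"
  "dang (union3 M1 M2 M3) (Inr (Inr d'')) = dang M3 d''"
  unfolding dang_def union3_simps by auto

lemma None_U: "None \<notin> verts (union3 M1 M2 M3)"
  unfolding union3_simps by auto


lemma two_ends_inside: assumes "endpt H d b1 = Some y1" "endpt H d b2 = Some y2" "y1 \<noteq> y2" "y1 \<in> S" "y2 \<in> S"
  shows "inside H S d"
proof -
  have "b1 \<noteq> b2"
  proof
    assume "b1 = b2"
    with assms(1,2) have "y1 = y2" by simp
    with assms(3) show False ..
  qed
  show ?thesis unfolding inside_def
  proof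
    fix b
    have "b = b1 \<or> b = b2" using \<open>b1 \<noteq> b2\<close> by (cases b; cases b1; cases b2) auto
    then show "\<exists>x\<in>S. endpt H d b = Some x" using assms by auto
  qed
qed

lemma inc_inside: "incident H d y1 \<Longrightarrow> incident H d y2 \<Longrightarrow> y1 \<noteq> y2 \<Longrightarrow> y1 \<in> S \<Longrightarrow> y2 \<in> S \<Longrightarrow> inside H S d"
  unfolding incident_def using two_ends_inside by metis

lemma no_three: assumes "incident H d y1" "incident H d y2" "incident H d y3" "distinct [y1,y2,y3]"
  shows False
proof -
  obtain b1 b2 b3 where "endpt H d b1 = Some y1" "endpt H d b2 = Some y2" "endpt H d b3 = Some y3"
    using assms unfolding incident_def by blast
  then show False using assms(4) by (cases b1; cases b2; cases b3) auto
qed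

locale negl =
  fixes N :: "('v,'e) negator"
  assumes neg: "is_negator N"
begin

abbreviation "H \<equiv> host N"
abbreviation "S \<equiv> {nu N, nw N, nv N}"
abbreviation "P \<equiv> neg_pole N"

lemma facts:
  "snark H" "girth_ge_5 H" "nu N \<in> verts H" "nw N \<in> verts H" "nv N \<in> verts H"
  "distinct [nu N, nw N, nv N]" "adj H (nu N) (nw N)" "adj H (nw N) (nv N)"
  "ni1 N \<noteq> ni2 N" "no1 N \<noteq> no2 N"
  "{ni1 N, ni2 N} = {e. incident H e (nu N) \<and> \<not> inside H S e}"
  "{no1 N, no2 N} = {e. incident H e (nv N) \<and> \<not> inside H S e}"
  "{nr N} = {e. incident H e (nw N) \<and> \<not> inside H S e}"
  using neg unfolding is_negator_def Let_def by auto

lemma graphH: "is_graph H" using facts(1) by (simp add: snark_def)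

lemma endH: "e \<in> edges H \<Longrightarrow> \<exists>x. endpt H e b = Some x \<and> x \<in> verts H"
  using graphH unfolding is_graph_def is_multipole_def by (metis option.collapse)

lemma P_simps:
  "verts P = verts H - S" "edges P = {e \<in> edges H. \<not> inside H S e}"
  "endpt P e b = (case endpt H e b of None \<Rightarrow> None | Some x \<Rightarrow> if x \<in> S then None else Some x)"
  by (auto simp: neg_pole_def Let_def del_verts_def)

lemma ends_P: "x \<notin> S \<Longrightarrow> ends_at P x = ends_at H x"
proof -
  assume x: "x \<notin> S"
  have "\<not> inside H S e" if "endpt H e b = Some x" for e b
    using that x unfolding inside_def by (metis option.inject)
  then show ?thesis using x unfolding ends_at_def P_simps by (auto split: option.splits)
qed

lemma mp_P: "is_multipole P"
proof -
  have m: "is_multipole H" using graphH by (simp add: is_graph_def)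
  have e: "\<forall>e\<in>edges P. \<forall>b. endpt P e b = None \<or> the (endpt P e b) \<in> verts P"
  proof (intro ballI allI)
    fix e b assume "e \<in> edges P"
    then obtain x where "endpt H e b = Some x" "x \<in> verts H" using endH unfolding P_simps by blast
    then show "endpt P e b = None \<or> the (endpt P e b) \<in> verts P" unfolding P_simps by auto
  qed
  have c: "\<forall>x\<in>verts P. card (ends_at P x) = 3"
    using m ends_P unfolding P_simps is_multipole_def by auto
  show ?thesis using m e c unfolding is_multipole_def P_simps by auto
qed

lemma col_restrict: "col H D \<phi> \<Longrightarrow> col P D \<phi>"
  unfolding col_def using ends_P unfolding P_simps by auto

lemma special_dang: assumes "incident H d y" "y \<in> S" "\<not> inside H S d"
  shows "dang P d" "d \<in> edges P"
proof -
  obtain c where c: "endpt H d c = Some y" "d \<in> edges H" using assms(1) unfolding incident_def by blast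
  obtain z where z: "endpt H d (\<not>c) = Some z" "z \<in> verts H" using endH[OF c(2)] by blast
  have "z \<notin> S"
  proof
    assume "z \<in> S"
    moreover have "y \<noteq> z"
    proof
      assume "y = z"
      then have "endpt H d c = endpt H d (\<not>c)" using c z by simp
      moreover have "endpt H d True \<noteq> endpt H d False" using facts(2) c(2) unfolding girth_ge_5_def by blast
      ultimately show False by (cases c) auto
    qed
    ultimately show False using two_ends_inside[OF c(1) z(1)] assms by auto
  qed
  then show "dang P d" "d \<in> edges P" using c z assms(2,3) unfolding dang_def P_simps
    by (auto intro!: exI[of _ c])
qed


lemma sp_props:
  "incident H (ni1 N) (nu N)" "\<not> inside H S (ni1 N)"
  "incident H (ni2 N) (nu N)" "\<not> inside H S (ni2 N)"
  "incident H (no1 N) (nv N)" "\<not> inside H S (no1 N)"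
  "incident H (no2 N) (nv N)" "\<not> inside H S (no2 N)"
  "incident H (nr N) (nw N)" "\<not> inside H S (nr N)"
  using facts(11,12,13) by blast+

lemma sp_dang: "dang P (ni1 N)" "dang P (ni2 N)" "dang P (no1 N)" "dang P (no2 N)" "dang P (nr N)"
  using special_dang(1) sp_props by auto

lemma sp_edges: "ni1 N \<in> edges P" "ni2 N \<in> edges P" "no1 N \<in> edges P" "no2 N \<in> edges P" "nr N \<in> edges P"
  using sp_dang unfolding dang_def by auto

lemma sp_distinct: "ni1 N \<noteq> no1 N" "ni1 N \<noteq> no2 N" "ni2 N \<noteq> no1 N" "ni2 N \<noteq> no2 N"
  "ni1 N \<noteq> nr N" "ni2 N \<noteq> nr N" "no1 N \<noteq> nr N" "no2 N \<noteq> nr N" "ni1 N \<noteq> ni2 N" "no1 N \<noteq> no2 N"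
  using sp_props facts(6,9,10) inc_inside[of H _ "nu N" "nv N" S] inc_inside[of H _ "nu N" "nw N" S]
    inc_inside[of H _ "nv N" "nw N" S] by auto

lemma opn_P: "opn P = {ni1 N, ni2 N, no1 N, no2 N, nr N}"
proof
  show "opn P \<subseteq> {ni1 N, ni2 N, no1 N, no2 N, nr N}"
  proof
    fix d assume "d \<in> opn P"
    then obtain c where d: "d \<in> edges P" "endpt P d c = None" unfolding opn_def by auto
    then have dH: "d \<in> edges H" "\<not> inside H S d" unfolding P_simps by auto
    obtain y where y: "endpt H d c = Some y" using endH[OF dH(1)] by blast
    then have yS: "y \<in> S" using d(2) unfolding P_simps by (auto split: if_splits)
    have inc: "incident H d y" using y dH unfolding incident_def by auto
    show "d \<in> {ni1 N, ni2 N, no1 N, no2 N, nr N}"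
      using yS inc dH facts(11,12,13) by auto
  qed
  show "{ni1 N, ni2 N, no1 N, no2 N, nr N} \<subseteq> opn P"
    using sp_dang unfolding dang_def opn_def by auto
qed

lemma adj_edge: assumes "adj H x y" obtains e where "e \<in> edges H" "incident H e x" "incident H e y"
  using assms unfolding adj_def incident_def by blast

lemma KK_third_alt: "a \<in> KK \<Longrightarrow> b \<in> KK \<Longrightarrow> c \<in> KK \<Longrightarrow> a \<noteq> b \<Longrightarrow> c \<noteq> a + b \<Longrightarrow> c = a \<or> c = b"
  unfolding KK_cases by (auto simp: zero_prod_def)

lemma inner_edges: obtains euw ewv where "euw \<in> edges H" "incident H euw (nu N)" "incident H euw (nw N)"
   "ewv \<in> edges H" "incident H ewv (nw N)" "incident H ewv (nv N)" "euw \<noteq> ewv"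
   "euw \<noteq> ni1 N" "euw \<noteq> ni2 N" "euw \<noteq> nr N" "ewv \<noteq> no1 N" "ewv \<noteq> no2 N" "ewv \<noteq> nr N"
proof -
  obtain euw where a: "euw \<in> edges H" "incident H euw (nu N)" "incident H euw (nw N)"
    using adj_edge[OF facts(7)] by blast
  obtain ewv where b: "ewv \<in> edges H" "incident H ewv (nw N)" "incident H ewv (nv N)"
    using adj_edge[OF facts(8)] by blast
  have "euw \<noteq> ewv" using no_three[of H euw "nu N" "nw N" "nv N"] a b facts(6) by auto
  moreover have "inside H S euw" using inc_inside[OF a(2,3)] facts(6) by auto
  moreover have "inside H S ewv" using inc_inside[OF b(2,3)] facts(6) by auto
  ultimately show ?thesis using that a b sp_props by metis
qed

lemma in_KK: "col H D \<phi> \<Longrightarrow> e \<in> edges H \<Longrightarrow> \<phi> e \<in> KK" unfolding col_def by auto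

lemma inc_edges: "incident H e x \<Longrightarrow> e \<in> edges H" unfolding incident_def by auto

lemma constr_Z: assumes "x \<in> verts P" "y \<in> verts P" "col H {x,y} \<phi>"
  shows "\<phi> (ni1 N) \<noteq> \<phi> (ni2 N) \<and> \<phi> (no1 N) \<noteq> \<phi> (no2 N) \<and>
    \<phi> (ni1 N) + \<phi> (ni2 N) \<noteq> \<phi> (no1 N) + \<phi> (no2 N) \<and>
    \<phi> (nr N) = (\<phi> (ni1 N) + \<phi> (ni2 N)) + (\<phi> (no1 N) + \<phi> (no2 N))"
proof -
  obtain euw ewv where E: "euw \<in> edges H" "incident H euw (nu N)" "incident H euw (nw N)"
   "ewv \<in> edges H" "incident H ewv (nw N)" "incident H ewv (nv N)" "euw \<noteq> ewv"
   "euw \<noteq> ni1 N" "euw \<noteq> ni2 N" "euw \<noteq> nr N" "ewv \<noteq> no1 N" "ewv \<noteq> no2 N" "ewv \<noteq> nr N"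
    by (rule inner_edges)
  have nd: "nu N \<notin> {x,y}" "nw N \<notin> {x,y}" "nv N \<notin> {x,y}" using assms(1,2) unfolding P_simps by auto
  note cn = col_neq[OF assms(3)]
  have K: "\<phi> (ni1 N) \<in> KK" "\<phi> (ni2 N) \<in> KK" "\<phi> (no1 N) \<in> KK" "\<phi> (no2 N) \<in> KK" "\<phi> (nr N) \<in> KK"
    "\<phi> euw \<in> KK" "\<phi> ewv \<in> KK"
    using in_KK[OF assms(3)] E sp_props inc_edges by blast+
  have u: "\<phi> (ni1 N) \<noteq> \<phi> (ni2 N)" "\<phi> (ni1 N) \<noteq> \<phi> euw" "\<phi> (ni2 N) \<noteq> \<phi> euw"
    using cn[OF facts(3) nd(1)] sp_props E sp_distinct by metis+
  have v: "\<phi> (no1 N) \<noteq> \<phi> (no2 N)" "\<phi> (no1 N) \<noteq> \<phi> ewv" "\<phi> (no2 N) \<noteq> \<phi> ewv"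
    using cn[OF facts(5) nd(3)] sp_props E sp_distinct by metis+
  have w: "\<phi> euw \<noteq> \<phi> ewv" "\<phi> euw \<noteq> \<phi> (nr N)" "\<phi> ewv \<noteq> \<phi> (nr N)"
    using cn[OF facts(4) nd(2)] sp_props E sp_distinct by metis+
  have 1: "\<phi> euw = \<phi> (ni1 N) + \<phi> (ni2 N)" using third K u by blast
  have 2: "\<phi> ewv = \<phi> (no1 N) + \<phi> (no2 N)" using third K v by blast
  have 3: "\<phi> (nr N) = \<phi> euw + \<phi> ewv" using third K w by blast
  show ?thesis using 1 2 3 u v w by simp
qed

lemma constr_I: assumes "y \<in> verts P" "col H {nu N, y} \<phi>"
  shows "\<phi> (no1 N) \<noteq> \<phi> (no2 N) \<and> (\<phi> (nr N) = \<phi> (no1 N) \<or> \<phi> (nr N) = \<phi> (no2 N))"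
proof -
  obtain euw ewv where E: "euw \<in> edges H" "incident H euw (nu N)" "incident H euw (nw N)"
   "ewv \<in> edges H" "incident H ewv (nw N)" "incident H ewv (nv N)" "euw \<noteq> ewv"
   "euw \<noteq> ni1 N" "euw \<noteq> ni2 N" "euw \<noteq> nr N" "ewv \<noteq> no1 N" "ewv \<noteq> no2 N" "ewv \<noteq> nr N"
    by (rule inner_edges)
  have nd: "nw N \<notin> {nu N,y}" "nv N \<notin> {nu N,y}" using assms(1) facts(6) unfolding P_simps by auto
  note cn = col_neq[OF assms(2)]
  have K: "\<phi> (no1 N) \<in> KK" "\<phi> (no2 N) \<in> KK" "\<phi> (nr N) \<in> KK" "\<phi> ewv \<in> KK"
    using in_KK[OF assms(2)] E sp_props inc_edges by blast+
  have v: "\<phi> (no1 N) \<noteq> \<phi> (no2 N)" "\<phi> (no1 N) \<noteq> \<phi> ewv" "\<phi> (no2 N) \<noteq> \<phi> ewv"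
    using cn[OF facts(5) nd(2)] sp_props E sp_distinct by metis+
  have w: "\<phi> ewv \<noteq> \<phi> (nr N)"
    using cn[OF facts(4) nd(1)] sp_props E sp_distinct by metis+
  have 2: "\<phi> ewv = \<phi> (no1 N) + \<phi> (no2 N)" using third K v by blast
  show ?thesis using KK_third_alt[OF K(1,2,3) v(1)] 2 w v by auto
qed

end


locale nnn = n1: negl N1 + n2: negl N2 + n3: negl N3
  for N1 :: "('v1,'e1) negator" and N2 :: "('v2,'e2) negator" and N3 :: "('v3,'e3) negator"
begin

abbreviation "U \<equiv> union3 (neg_pole N1) (neg_pole N2) (neg_pole N3)"
abbreviation "J1 \<equiv> junction U (Inl (no1 N1)) (Inr (Inl (ni1 N2)))"
abbreviation "J2 \<equiv> junction J1 (Inl (no2 N1)) (Inr (Inl (ni2 N2)))"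
abbreviation "J3 \<equiv> junction J2 (Inr (Inl (no1 N2))) (Inr (Inr (ni1 N3)))"
abbreviation "J4 \<equiv> junction J3 (Inr (Inl (no2 N2))) (Inr (Inr (ni2 N3)))"
abbreviation "J5 \<equiv> junction J4 (Inr (Inr (no1 N3))) (Inl (ni1 N1))"
abbreviation "J6 \<equiv> junction J5 (Inr (Inr (no2 N3))) (Inl (ni2 N1))"
abbreviation "R \<equiv> {Inl (nr N1), Inr (Inl (nr N2)), Inr (Inr (nr N3))}"
abbreviation "G \<equiv> add_vertex J6 None R"

lemma G_eq: "NNN N1 N2 N3 = G" by (simp add: NNN_def Let_def)

lemmas sd = n1.sp_distinct n2.sp_distinct n3.sp_distinct
  n1.sp_distinct[symmetric] n2.sp_distinct[symmetric] n3.sp_distinct[symmetric]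

lemma dU: "dang U (Inl (ni1 N1))" "dang U (Inl (ni2 N1))" "dang U (Inl (no1 N1))" "dang U (Inl (no2 N1))" "dang U (Inl (nr N1))"
  "dang U (Inr (Inl (ni1 N2)))" "dang U (Inr (Inl (ni2 N2)))" "dang U (Inr (Inl (no1 N2)))" "dang U (Inr (Inl (no2 N2)))" "dang U (Inr (Inl (nr N2)))"
  "dang U (Inr (Inr (ni1 N3)))" "dang U (Inr (Inr (ni2 N3)))" "dang U (Inr (Inr (no1 N3)))" "dang U (Inr (Inr (no2 N3)))" "dang U (Inr (Inr (nr N3)))"
  by (simp_all add: dang_U n1.sp_dang n2.sp_dang n3.sp_dang)

lemma d1: "dang J1 (Inl (no2 N1))" "dang J1 (Inr (Inl (ni2 N2)))" "dang J1 (Inr (Inl (no1 N2)))" "dang J1 (Inr (Inr (ni1 N3)))"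
  "dang J1 (Inr (Inl (no2 N2)))" "dang J1 (Inr (Inr (ni2 N3)))" "dang J1 (Inr (Inr (no1 N3)))" "dang J1 (Inl (ni1 N1))"
  "dang J1 (Inr (Inr (no2 N3)))" "dang J1 (Inl (ni2 N1))"
  "dang J1 (Inl (nr N1))" "dang J1 (Inr (Inl (nr N2)))" "dang J1 (Inr (Inr (nr N3)))"
  using dU sd by (subst junction_dang; simp)+

lemma d2: "dang J2 (Inr (Inl (no1 N2)))" "dang J2 (Inr (Inr (ni1 N3)))"
  "dang J2 (Inr (Inl (no2 N2)))" "dang J2 (Inr (Inr (ni2 N3)))" "dang J2 (Inr (Inr (no1 N3)))" "dang J2 (Inl (ni1 N1))"
  "dang J2 (Inr (Inr (no2 N3)))" "dang J2 (Inl (ni2 N1))"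
  "dang J2 (Inl (nr N1))" "dang J2 (Inr (Inl (nr N2)))" "dang J2 (Inr (Inr (nr N3)))"
  using d1 sd by (subst junction_dang; simp)+

lemma d3: 
  "dang J3 (Inr (Inl (no2 N2)))" "dang J3 (Inr (Inr (ni2 N3)))" "dang J3 (Inr (Inr (no1 N3)))" "dang J3 (Inl (ni1 N1))"
  "dang J3 (Inr (Inr (no2 N3)))" "dang J3 (Inl (ni2 N1))"
  "dang J3 (Inl (nr N1))" "dang J3 (Inr (Inl (nr N2)))" "dang J3 (Inr (Inr (nr N3)))"
  using d2 sd by (subst junction_dang; simp)+

lemma d4: 
  "dang J4 (Inr (Inr (no1 N3)))" "dang J4 (Inl (ni1 N1))"
  "dang J4 (Inr (Inr (no2 N3)))" "dang J4 (Inl (ni2 N1))"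
  "dang J4 (Inl (nr N1))" "dang J4 (Inr (Inl (nr N2)))" "dang J4 (Inr (Inr (nr N3)))"
  using d3 sd by (subst junction_dang; simp)+

lemma d5: 
  "dang J5 (Inr (Inr (no2 N3)))" "dang J5 (Inl (ni2 N1))"
  "dang J5 (Inl (nr N1))" "dang J5 (Inr (Inl (nr N2)))" "dang J5 (Inr (Inr (nr N3)))"
  using d4 sd by (subst junction_dang; simp)+

lemma d6: "dang J6 (Inl (nr N1))" "dang J6 (Inr (Inl (nr N2)))" "dang J6 (Inr (Inr (nr N3)))"
  using d5 sd by (subst junction_dang; simp)+

lemma mpU: "is_multipole U" by (rule mp_U) (simp_all add: n1.mp_P n2.mp_P n3.mp_P)

lemma mp6: "is_multipole J6"
  by (intro mp_junction mpU dU d1 d2 d3 d4 d5) simp_all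

lemma verts6: "verts J6 = verts U" by (simp add: junction_simps)

lemma addv6: obtains c1 c2 c3 where "addv J6 None (Inl (nr N1)) (Inr (Inl (nr N2))) (Inr (Inr (nr N3))) c1 c2 c3"
proof -
  obtain c1 c2 c3 where c: "endpt J6 (Inl (nr N1)) c1 = None" "endpt J6 (Inl (nr N1)) (\<not>c1) \<noteq> None"
    "endpt J6 (Inr (Inl (nr N2))) c2 = None" "endpt J6 (Inr (Inl (nr N2))) (\<not>c2) \<noteq> None"
    "endpt J6 (Inr (Inr (nr N3))) c3 = None" "endpt J6 (Inr (Inr (nr N3))) (\<not>c3) \<noteq> None"
    using d6 unfolding dang_def by metis
  have "addv J6 None (Inl (nr N1)) (Inr (Inl (nr N2))) (Inr (Inr (nr N3))) c1 c2 c3"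
    unfolding addv_def using mp6 c d6 None_U[of "neg_pole N1" "neg_pole N2" "neg_pole N3"]
    by (simp add: verts6 dang_def)
  then show ?thesis using that by blast
qed


definition "p1 \<phi> = (\<phi> \<circ> Inl)(ni1 N1 := \<phi> (Inr (Inr (no1 N3))), ni2 N1 := \<phi> (Inr (Inr (no2 N3))))"
definition "p2 \<phi> = (\<phi> \<circ> Inr \<circ> Inl)(ni1 N2 := \<phi> (Inl (no1 N1)), ni2 N2 := \<phi> (Inl (no2 N1)))"
definition "p3 \<phi> = (\<phi> \<circ> Inr \<circ> Inr)(ni1 N3 := \<phi> (Inr (Inl (no1 N2))), ni2 N3 := \<phi> (Inr (Inl (no2 N2))))"

lemma col6: "col J6 D \<phi> \<longleftrightarrow> col U D (\<phi>(Inl (ni2 N1) := \<phi> (Inr (Inr (no2 N3))), Inl (ni1 N1) := \<phi> (Inr (Inr (no1 N3))),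
   Inr (Inr (ni2 N3)) := \<phi> (Inr (Inl (no2 N2))), Inr (Inr (ni1 N3)) := \<phi> (Inr (Inl (no1 N2))),
   Inr (Inl (ni2 N2)) := \<phi> (Inl (no2 N1)), Inr (Inl (ni1 N2)) := \<phi> (Inl (no1 N1))))"
  by (simp add: col_junction dU d1 d2 d3 d4 d5 sd)

lemma colU: "col U D (\<phi>(Inl (ni2 N1) := \<phi> (Inr (Inr (no2 N3))), Inl (ni1 N1) := \<phi> (Inr (Inr (no1 N3))),
   Inr (Inr (ni2 N3)) := \<phi> (Inr (Inl (no2 N2))), Inr (Inr (ni1 N3)) := \<phi> (Inr (Inl (no1 N2))),
   Inr (Inl (ni2 N2)) := \<phi> (Inl (no2 N1)), Inr (Inl (ni1 N2)) := \<phi> (Inl (no1 N1)))) \<longleftrightarrow>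
   col (neg_pole N1) {x. Some (Inl x) \<in> D} (p1 \<phi>) \<and> col (neg_pole N2) {x. Some (Inr (Inl x)) \<in> D} (p2 \<phi>) \<and>
   col (neg_pole N3) {x. Some (Inr (Inr x)) \<in> D} (p3 \<phi>)"
proof -
  let ?F = "\<phi>(Inl (ni2 N1) := \<phi> (Inr (Inr (no2 N3))), Inl (ni1 N1) := \<phi> (Inr (Inr (no1 N3))),
   Inr (Inr (ni2 N3)) := \<phi> (Inr (Inl (no2 N2))), Inr (Inr (ni1 N3)) := \<phi> (Inr (Inl (no1 N2))),
   Inr (Inl (ni2 N2)) := \<phi> (Inl (no2 N1)), Inr (Inl (ni1 N2)) := \<phi> (Inl (no1 N1)))"
  have "?F \<circ> Inl = p1 \<phi>" "?F \<circ> Inr \<circ> Inl = p2 \<phi>" "?F \<circ> Inr \<circ> Inr = p3 \<phi>"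
    by (auto simp: fun_eq_iff p1_def p2_def p3_def sd)
  then show ?thesis by (simp add: col_U)
qed

lemma col_G: "col G D \<phi> \<longleftrightarrow>
   col (neg_pole N1) {x. Some (Inl x) \<in> D} (p1 \<phi>) \<and> col (neg_pole N2) {x. Some (Inr (Inl x)) \<in> D} (p2 \<phi>) \<and>
   col (neg_pole N3) {x. Some (Inr (Inr x)) \<in> D} (p3 \<phi>) \<and>
   (None \<notin> D \<longrightarrow> \<phi> (Inl (nr N1)) \<noteq> \<phi> (Inr (Inl (nr N2))) \<and> \<phi> (Inl (nr N1)) \<noteq> \<phi> (Inr (Inr (nr N3))) \<and>
       \<phi> (Inr (Inl (nr N2))) \<noteq> \<phi> (Inr (Inr (nr N3))))"
proof -
  obtain c1 c2 c3 where a: "addv J6 None (Inl (nr N1)) (Inr (Inl (nr N2))) (Inr (Inr (nr N3))) c1 c2 c3"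
    by (rule addv6)
  show ?thesis using addv.col_A[OF a] col6 colU by simp
qed

lemma graph_G: "is_graph G"
proof -
  obtain c1 c2 c3 where a: "addv J6 None (Inl (nr N1)) (Inr (Inl (nr N2))) (Inr (Inr (nr N3))) c1 c2 c3"
    by (rule addv6)
  have m: "is_multipole G" using addv.mp_A[OF a] .
  have "opn J6 = opn U - {Inl (no1 N1), Inr (Inl (ni1 N2)), Inl (no2 N1), Inr (Inl (ni2 N2)),
     Inr (Inl (no1 N2)), Inr (Inr (ni1 N3)), Inr (Inl (no2 N2)), Inr (Inr (ni2 N3)),
     Inr (Inr (no1 N3)), Inl (ni1 N1), Inr (Inr (no2 N3)), Inl (ni2 N1)}"
    by (simp add: opn_junction dU d1 d2 d3 d4 d5 sd) blast
  moreover have "opn U = {Inl (ni1 N1), Inl (ni2 N1), Inl (no1 N1), Inl (no2 N1), Inl (nr N1),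
     Inr (Inl (ni1 N2)), Inr (Inl (ni2 N2)), Inr (Inl (no1 N2)), Inr (Inl (no2 N2)), Inr (Inl (nr N2)),
     Inr (Inr (ni1 N3)), Inr (Inr (ni2 N3)), Inr (Inr (no1 N3)), Inr (Inr (no2 N3)), Inr (Inr (nr N3))}"
    by (simp add: opn_U n1.opn_P n2.opn_P n3.opn_P) blast
  ultimately have "opn G = {}" using addv.opn_A[OF a] by auto
  then show ?thesis using m unfolding is_graph_def opn_def add_vertex_simps by auto
qed

lemma verts_G: "verts G = insert None ((Some \<circ> Inl) ` verts (neg_pole N1) \<union> (Some \<circ> Inr \<circ> Inl) ` verts (neg_pole N2) \<union> (Some \<circ> Inr \<circ> Inr) ` verts (neg_pole N3))"
  by (simp add: add_vertex_simps junction_simps union3_simps)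

end


lemma adj_sym: "adj M x y \<Longrightarrow> adj M y x" unfolding adj_def by blast

lemma graph_end: assumes "is_graph M" "e \<in> edges M"
  shows "\<exists>t. endpt M e b = Some t \<and> t \<in> verts M"
  using assms unfolding is_graph_def is_multipole_def by (metis option.collapse)

lemma other_end: assumes "is_graph M" "e \<in> edges M" "endpt M e b = Some s"
  shows "\<exists>t. endpt M e (\<not>b) = Some t \<and> t \<in> verts M \<and> (t = s \<or> adj M s t)"
proof -
  obtain t where t: "endpt M e (\<not>b) = Some t" "t \<in> verts M" using graph_end[OF assms(1,2)] by blast
  have "adj M s t" using t(1) assms(2,3) unfolding adj_def by (cases b) auto
  then show ?thesis using t by blast
qed

lemma nbr: assumes g: "is_graph M" and s: "s \<in> verts M"
  shows "\<exists>t\<in>verts M. t \<noteq> s \<and> adj M s t"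
proof (rule ccontr)
  assume "\<not> ?thesis"
  then have loop: "endpt M e (\<not>b) = Some s" if "e \<in> edges M" "endpt M e b = Some s" for e b
    using other_end[OF g that] by metis
  let ?E = "{e \<in> edges M. endpt M e True = Some s}"
  have "ends_at M s = ?E \<times> UNIV"
  proof (rule set_eqI)
    fix p :: "'b \<times> bool"
    obtain e b where p: "p = (e,b)" by fastforce
    show "p \<in> ends_at M s \<longleftrightarrow> p \<in> ?E \<times> UNIV"
      unfolding p ends_at_def using loop[of e False] loop[of e True] by (cases b) auto
  qed
  moreover have "finite ?E" using g unfolding is_graph_def is_multipole_def by auto
  ultimately have "card (ends_at M s) = card ?E * 2" by (simp add: card_cartesian_product)
  moreover have "card (ends_at M s) = 3" using g s unfolding is_graph_def is_multipole_def by auto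
  ultimately show False by presburger
qed

lemma crit_connected:
  assumes g: "is_graph M" and nc: "\<not> colourable M"
    and crit: "\<forall>x\<in>verts M. \<forall>y\<in>verts M. x \<noteq> y \<longrightarrow> colourable (del_verts M {x,y})"
    and ne: "verts M \<noteq> {}"
  shows "connected_graph M"
proof (rule ccontr)
  let ?R = "{(a, b). adj M a b}"
  assume "\<not> connected_graph M"
  then obtain p q where pq: "p \<in> verts M" "q \<in> verts M" "(p,q) \<notin> ?R\<^sup>*"
    using ne unfolding connected_graph_def by blast
  define X where "X = {y \<in> verts M. (p,y) \<in> ?R\<^sup>*}"
  define Y where "Y = verts M - X"
  have closX: "t \<in> X" if "s \<in> X" "t \<in> verts M" "adj M s t" for s t
    using that unfolding X_def by (auto intro: rtrancl_into_rtrancl)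
  have closY: "t \<in> Y" if "s \<in> Y" "t \<in> verts M" "adj M s t" for s t
  proof (rule ccontr)
    assume "t \<notin> Y"
    then have "t \<in> X" using that unfolding Y_def by auto
    then have "s \<in> X" using closX[of t s] that adj_sym[OF that(3)] unfolding Y_def by auto
    then show False using that(1) unfolding Y_def by auto
  qed
  have pX: "p \<in> X" using pq unfolding X_def by auto
  have qY: "q \<in> Y" using pq unfolding X_def Y_def by auto
  obtain x2 where x2: "x2 \<in> verts M" "x2 \<noteq> p" "adj M p x2" using nbr[OF g pq(1)] by blast
  obtain y2 where y2: "y2 \<in> verts M" "y2 \<noteq> q" "adj M q y2" using nbr[OF g pq(2)] by blast
  have x2X: "x2 \<in> X" using closX[OF pX x2(1,3)] .
  have y2Y: "y2 \<in> Y" using closY[OF qY y2(1,3)] .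
  obtain \<psi> where \<psi>: "col M {q, y2} \<psi>" using crit pq y2 by (metis colourable_def col_del)
  obtain \<chi> where \<chi>: "col M {p, x2} \<chi>" using crit pq x2 by (metis colourable_def col_del)
  define \<phi> where "\<phi> e = (if \<exists>b s. endpt M e b = Some s \<and> s \<in> X then \<psi> e else \<chi> e)" for e
  have XY: "X \<inter> Y = {}" "X \<union> Y = verts M" unfolding Y_def X_def by auto
  have "col M {} \<phi>"
    unfolding col_def
  proof (intro conjI ballI impI)
    fix e assume "e \<in> edges M"
    then show "\<phi> e \<in> KK" using \<psi> \<chi> unfolding col_def \<phi>_def by auto
  next
    fix s assume s: "s \<in> verts M" "s \<notin> {}"
    show "inj_on (\<lambda>(e, b). \<phi> e) (ends_at M s)"
    proof (cases "s \<in> X")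
      case True
      have "inj_on (\<lambda>(e, b). \<psi> e) (ends_at M s)"
      proof -
        have "s \<notin> {q, y2}" using True XY qY y2Y by auto
        then show ?thesis using \<psi> s unfolding col_def by blast
      qed
      moreover have "inj_on (\<lambda>(e, b). \<phi> e) (ends_at M s) = inj_on (\<lambda>(e, b). \<psi> e) (ends_at M s)"
      proof (rule inj_on_cong)
        fix p' assume "p' \<in> ends_at M s"
        then show "(\<lambda>(e, b). \<phi> e) p' = (\<lambda>(e, b). \<psi> e) p'"
          using True unfolding ends_at_def \<phi>_def by auto
      qed
      ultimately show ?thesis by simp
    next
      case False
      then have sY: "s \<in> Y" using s XY by auto
      have "inj_on (\<lambda>(e, b). \<chi> e) (ends_at M s)"
      proof -
        have "s \<notin> {p, x2}" using sY XY pX x2X by auto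
        then show ?thesis using \<chi> s unfolding col_def by blast
      qed
      moreover have "inj_on (\<lambda>(e, b). \<phi> e) (ends_at M s) = inj_on (\<lambda>(e, b). \<chi> e) (ends_at M s)"
      proof (rule inj_on_cong)
        fix p' assume hp: "p' \<in> ends_at M s"
        obtain e b where p': "p' = (e,b)" "e \<in> edges M" "endpt M e b = Some s"
          using hp unfolding ends_at_def by auto
        obtain t where t: "endpt M e (\<not>b) = Some t" "t \<in> verts M" "t = s \<or> adj M s t"
          using other_end[OF g p'(2,3)] by blast
        have tY: "t \<in> Y" using t sY closY by auto
        have "\<not> (\<exists>b' s'. endpt M e b' = Some s' \<and> s' \<in> X)"
        proof
          assume "\<exists>b' s'. endpt M e b' = Some s' \<and> s' \<in> X"
          then obtain b' s' where "endpt M e b' = Some s'" "s' \<in> X" by blast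
          moreover have "b' = b \<or> b' = (\<not>b)" by auto
          ultimately show False using p'(3) t(1) sY tY XY by auto
        qed
        then show "(\<lambda>(e, b). \<phi> e) p' = (\<lambda>(e, b). \<chi> e) p'" using p' unfolding \<phi>_def by auto
      qed
      ultimately show ?thesis by simp
    qed
  qed
  then show False using nc by (simp add: colourable_def col_empty)
qed


definition PS :: "(colour \<times> colour \<times> colour \<times> colour \<times> colour) set" where
  "PS = {(z, z, a, b, a + b) | z a b. z \<in> KK \<and> a \<in> KK \<and> b \<in> KK \<and> a \<noteq> b} \<union>
        {(a, b, z, z, a + b) | z a b. z \<in> KK \<and> a \<in> KK \<and> b \<in> KK \<and> a \<noteq> b}"

definition TT :: "('v,'e) negator \<Rightarrow> 'v set \<Rightarrow> (colour \<times> colour \<times> colour \<times> colour \<times> colour) set" where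
  "TT N D = {tuple N \<psi> | \<psi>. col (neg_pole N) D \<psi>}"

definition Glue where
  "Glue T1 T2 T3 ctr \<longleftrightarrow> (\<exists>a1 a2 b1 b2 c1 c2 r1 r2 r3. (a1,a2,b1,b2,r1) \<in> T1 \<and> (b1,b2,c1,c2,r2) \<in> T2 \<and>
     (c1,c2,a1,a2,r3) \<in> T3 \<and> (ctr \<longrightarrow> r1 \<noteq> r2 \<and> r1 \<noteq> r3 \<and> r2 \<noteq> r3))"

lemma Glue_rot: "Glue T2 T3 T1 ctr \<Longrightarrow> Glue T1 T2 T3 ctr"
  unfolding Glue_def by blast

lemma PS_char: "(x1,x2,y1,y2,r) \<in> PS \<Longrightarrow> (x1 = x2 \<longleftrightarrow> y1 \<noteq> y2)"
  unfolding PS_def by auto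

lemma PS_in1: "z \<in> KK \<Longrightarrow> a \<in> KK \<Longrightarrow> b \<in> KK \<Longrightarrow> a \<noteq> b \<Longrightarrow> (z,z,a,b,a+b) \<in> PS"
  unfolding PS_def by blast
lemma PS_in2: "z \<in> KK \<Longrightarrow> a \<in> KK \<Longrightarrow> b \<in> KK \<Longrightarrow> a \<noteq> b \<Longrightarrow> (a,b,z,z,a+b) \<in> PS"
  unfolding PS_def by blast

lemma L_center: assumes "PS \<subseteq> T2" "PS \<subseteq> T3" "(a,a,b,b,r) \<in> T1" "a \<in> KK" "b \<in> KK" "a \<noteq> b"
  shows "Glue T1 T2 T3 False"
proof -
  have ab: "a + b \<in> KK" "a \<noteq> a + b" using sumKK[OF assms(4,5,6)] by auto
  have "(b,b,a,a+b,a+(a+b)) \<in> T2" using PS_in1[OF assms(5) assms(4) ab(1) ab(2)] assms(1) by blast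
  moreover have "(a,a+b,a,a,a+(a+b)) \<in> T3" using PS_in2[OF assms(4) assms(4) ab(1) ab(2)] assms(2) by blast
  ultimately show ?thesis using assms(3) unfolding Glue_def by blast
qed

lemma L_same: assumes "PS \<subseteq> T2" "PS \<subseteq> T3" "(a,b,c,d,(a+b)+(c+d)) \<in> T1"
  "a \<in> KK" "b \<in> KK" "c \<in> KK" "d \<in> KK" "a \<noteq> b" "c \<noteq> d" "a + b \<noteq> c + d"
  shows "Glue T1 T2 T3 True"
proof -
  have ab: "a + b \<in> KK" using sumKK[OF assms(4,5,8)] by auto
  have cd: "c + d \<in> KK" using sumKK[OF assms(6,7,9)] by auto
  have "(c,d,a,a,c+d) \<in> T2" using PS_in2[OF assms(4) assms(6,7,9)] assms(1) by blast
  moreover have "(a,a,a,b,a+b) \<in> T3" using PS_in1[OF assms(4) assms(4,5,8)] assms(2) by blast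
  moreover have "(a+b)+(c+d) \<noteq> c+d" "(a+b)+(c+d) \<noteq> a+b" "c + d \<noteq> a + b"
    using sumKK[OF ab cd assms(10)] assms(10) by auto
  ultimately show ?thesis using assms(3) unfolding Glue_def by blast
qed

lemma L_adj: assumes "\<forall>a b. a \<in> KK \<longrightarrow> b \<in> KK \<longrightarrow> a \<noteq> b \<longrightarrow> (a,a,b,b,a) \<in> T1 \<and> (a,a,b,b,b) \<in> T1"
  "(p,p,c,d,r) \<in> T2" "p \<in> KK" "c \<in> KK" "d \<in> KK" "r \<in> KK" "c \<noteq> d" "r = c \<or> r = d" "PS \<subseteq> T3"
  shows "Glue T1 T2 T3 True"
proof -
  define s where "s = (if r = c then d else c)"
  have cd: "c + d \<in> KK" "c + d \<noteq> c" "c + d \<noteq> d" using sumKK[OF assms(4,5,7)] by auto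
  have s: "s \<in> KK" "s \<noteq> r" "s \<noteq> c + d" "r \<noteq> c + d" using assms(4-8) cd unfolding s_def by auto
  show ?thesis
  proof (cases "s = p")
    case False
    have "(s,s,p,p,s) \<in> T1" using assms(1) s(1) assms(3) False by blast
    moreover have "(c,d,s,s,c+d) \<in> T3" using PS_in2[OF s(1) assms(4,5,7)] assms(9) by blast
    ultimately show ?thesis using assms(2) s unfolding Glue_def by blast
  next
    case True
    have "(r,r,p,p,p) \<in> T1" using assms(1) assms(6) assms(3) True s(2) by metis
    moreover have "(c,d,r,r,c+d) \<in> T3" using PS_in2[OF assms(6) assms(4,5,7)] assms(9) by blast
    ultimately show ?thesis using assms(2) s True unfolding Glue_def by blast
  qed
qed

lemma KK_eq: "a \<in> KK \<Longrightarrow> b \<in> KK \<Longrightarrow> a \<noteq> b \<Longrightarrow> KK = {a, b, a + b}"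
  unfolding KK_cases by (auto simp: zero_prod_def KK_def)

lemma perm_exists: assumes "a0 \<in> KK" "b0 \<in> KK" "a0 \<noteq> b0" "a \<in> KK" "b \<in> KK" "a \<noteq> b"
  shows "\<exists>\<sigma>. inj_on \<sigma> KK \<and> \<sigma> ` KK \<subseteq> KK \<and> \<sigma> a0 = a \<and> \<sigma> b0 = b"
proof -
  define \<sigma> where "\<sigma> x = (if x = a0 then a else if x = b0 then b else a + b)" for x
  have K0: "KK = {a0, b0, a0 + b0}" by (rule KK_eq[OF assms(1-3)])
  have K1: "KK = {a, b, a + b}" by (rule KK_eq[OF assms(4-6)])
  have s0: "a0 + b0 \<noteq> a0" "a0 + b0 \<noteq> b0" using sumKK[OF assms(1-3)] by auto
  have s1: "a + b \<noteq> a" "a + b \<noteq> b" using sumKK[OF assms(4-6)] by auto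
  have "inj_on \<sigma> KK" unfolding K0 using s0 s1 assms(3,6) by (auto simp: \<sigma>_def inj_on_def)
  moreover have "\<sigma> ` KK \<subseteq> KK" unfolding \<sigma>_def using K1 by auto
  moreover have "\<sigma> a0 = a" "\<sigma> b0 = b" using assms(3) by (auto simp: \<sigma>_def)
  ultimately show ?thesis by blast
qed

lemma tuple_comp: "tuple N (\<sigma> \<circ> \<psi>) = (\<sigma> (\<psi> (ni1 N)), \<sigma> (\<psi> (ni2 N)), \<sigma> (\<psi> (no1 N)), \<sigma> (\<psi> (no2 N)), \<sigma> (\<psi> (nr N)))"
  by (simp add: tuple_def)

locale negpf = negl N for N :: "('v,'e) negator" +
  assumes perf: "perfect N" and feas: "feasible N"
begin

lemma PS_sub: "PS \<subseteq> TT N D"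
proof
  fix t assume "t \<in> PS"
  then obtain \<psi> where "t = tuple N \<psi>" "is_colouring P \<psi>"
    using perf unfolding perfect_def PS_def by blast
  then show "t \<in> TT N D" unfolding TT_def by (auto simp: col_empty intro: col_mono)
qed

lemma feas_parts:
  "\<forall>x\<in>verts P. \<forall>y\<in>verts P. x \<noteq> y \<longrightarrow> colourable (del_verts H {x, y})"
  "\<forall>x\<in>{nu N, nv N}. \<forall>y\<in>verts P. \<forall>e f. e \<noteq> f \<and> incident H e x \<and> incident H f x \<longrightarrow>
        (\<exists>\<phi>. is_colouring (del_verts H {x, y}) \<phi> \<and> \<phi> e = \<phi> f)"
  "\<forall>y\<in>verts P. \<exists>\<phi> \<psi> a b. a \<in> KK \<and> b \<in> KK \<and> a \<noteq> b \<and>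
        is_colouring (del_verts P {y}) \<phi> \<and> tuple N \<phi> = (a, a, b, b, a) \<and>
        is_colouring (del_verts P {y}) \<psi> \<and> tuple N \<psi> = (a, a, b, b, b)"
  using feas unfolding feasible_def Let_def by auto

lemma TT_II: assumes "y \<in> verts P"
  shows "\<forall>a b. a \<in> KK \<longrightarrow> b \<in> KK \<longrightarrow> a \<noteq> b \<longrightarrow> (a,a,b,b,a) \<in> TT N {y} \<and> (a,a,b,b,b) \<in> TT N {y}"
proof (intro allI impI)
  fix a b assume ab: "a \<in> KK" "b \<in> KK" "a \<noteq> b"
  from feas_parts(3) assms obtain \<phi> \<psi> a0 b0 where h0: "a0 \<in> KK" "b0 \<in> KK" "a0 \<noteq> b0"
     "is_colouring (del_verts P {y}) \<phi>" "tuple N \<phi> = (a0, a0, b0, b0, a0)"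
     "is_colouring (del_verts P {y}) \<psi>" "tuple N \<psi> = (a0, a0, b0, b0, b0)"
    by blast
  have h: "a0 \<in> KK" "b0 \<in> KK" "a0 \<noteq> b0" "col P {y} \<phi>" "tuple N \<phi> = (a0, a0, b0, b0, a0)"
     "col P {y} \<psi>" "tuple N \<psi> = (a0, a0, b0, b0, b0)"
    using h0 by (simp_all add: col_del)
  obtain \<sigma> where \<sigma>: "inj_on \<sigma> KK" "\<sigma> ` KK \<subseteq> KK" "\<sigma> a0 = a" "\<sigma> b0 = b"
    using perm_exists[OF h(1,2,3) ab] by blast
  have "col P {y} (\<sigma> \<circ> \<phi>)" "col P {y} (\<sigma> \<circ> \<psi>)" using col_perm \<sigma>(1,2) h(4,6) by blast+
  then have "tuple N (\<sigma> \<circ> \<phi>) \<in> TT N {y}" "tuple N (\<sigma> \<circ> \<psi>) \<in> TT N {y}" unfolding TT_def by blast+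
  moreover have "tuple N (\<sigma> \<circ> \<phi>) = (a,a,b,b,a)" "tuple N (\<sigma> \<circ> \<psi>) = (a,a,b,b,b)"
    using h(5,7) \<sigma>(3,4) unfolding tuple_comp by (simp_all add: tuple_def)
  ultimately show "(a,a,b,b,a) \<in> TT N {y} \<and> (a,a,b,b,b) \<in> TT N {y}" by simp
qed

lemma tuple_KK: "col P D \<psi> \<Longrightarrow> \<psi> (ni1 N) \<in> KK \<and> \<psi> (ni2 N) \<in> KK \<and> \<psi> (no1 N) \<in> KK \<and> \<psi> (no2 N) \<in> KK \<and> \<psi> (nr N) \<in> KK"
  using sp_edges unfolding col_def by auto

lemma TT_Z: assumes "x \<in> verts P" "y \<in> verts P" "x \<noteq> y"
  shows "\<exists>a b c d. (a,b,c,d,(a+b)+(c+d)) \<in> TT N {x,y} \<and> a \<in> KK \<and> b \<in> KK \<and> c \<in> KK \<and> d \<in> KK \<and>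
     a \<noteq> b \<and> c \<noteq> d \<and> a + b \<noteq> c + d"
proof -
  have "colourable (del_verts H {x, y})" using feas_parts(1) assms by blast
  then obtain \<phi> where \<phi>: "col H {x,y} \<phi>" by (auto simp: colourable_def col_del)
  have c: "col P {x,y} \<phi>" using col_restrict[OF \<phi>] .
  have "tuple N \<phi> \<in> TT N {x,y}" using c unfolding TT_def by blast
  moreover have "tuple N \<phi> = (\<phi> (ni1 N), \<phi> (ni2 N), \<phi> (no1 N), \<phi> (no2 N), (\<phi> (ni1 N) + \<phi> (ni2 N)) + (\<phi> (no1 N) + \<phi> (no2 N)))"
    using constr_Z[OF assms(1,2) \<phi>] by (simp add: tuple_def)
  ultimately show ?thesis using constr_Z[OF assms(1,2) \<phi>] tuple_KK[OF c] by (intro exI) auto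
qed

lemma TT_I: assumes "y \<in> verts P"
  shows "\<exists>p c d r. (p,p,c,d,r) \<in> TT N {y} \<and> p \<in> KK \<and> c \<in> KK \<and> d \<in> KK \<and> r \<in> KK \<and> c \<noteq> d \<and> (r = c \<or> r = d)"
proof -
  have "\<exists>\<phi>. is_colouring (del_verts H {nu N, y}) \<phi> \<and> \<phi> (ni1 N) = \<phi> (ni2 N)"
    using feas_parts(2) assms sp_props(1,3) sp_distinct(9) by blast
  then obtain \<phi> where \<phi>: "col H {nu N, y} \<phi>" "\<phi> (ni1 N) = \<phi> (ni2 N)" by (auto simp: col_del)
  have c: "col P {nu N, y} \<phi>" using col_restrict[OF \<phi>(1)] .
  have c': "col P {y} \<phi>" using c by (rule col_mono) (auto simp: P_simps)
  have "tuple N \<phi> \<in> TT N {y}" using c' unfolding TT_def by blast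
  moreover have "tuple N \<phi> = (\<phi> (ni1 N), \<phi> (ni1 N), \<phi> (no1 N), \<phi> (no2 N), \<phi> (nr N))"
    using \<phi>(2) by (simp add: tuple_def)
  ultimately show ?thesis using constr_I[OF assms \<phi>(1)] tuple_KK[OF c'] by (intro exI) auto
qed

end


context nnn
begin

lemma glue: assumes "Glue (TT N1 {x. Some (Inl x) \<in> D}) (TT N2 {x. Some (Inr (Inl x)) \<in> D}) (TT N3 {x. Some (Inr (Inr x)) \<in> D}) (None \<notin> D)"
  shows "colourable (del_verts G D)"
proof -
  obtain a1 a2 b1 b2 c1 c2 r1 r2 r3 \<psi>1 \<psi>2 \<psi>3 where
    h: "col (neg_pole N1) {x. Some (Inl x) \<in> D} \<psi>1" "tuple N1 \<psi>1 = (a1,a2,b1,b2,r1)"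
       "col (neg_pole N2) {x. Some (Inr (Inl x)) \<in> D} \<psi>2" "tuple N2 \<psi>2 = (b1,b2,c1,c2,r2)"
       "col (neg_pole N3) {x. Some (Inr (Inr x)) \<in> D} \<psi>3" "tuple N3 \<psi>3 = (c1,c2,a1,a2,r3)"
       "None \<notin> D \<longrightarrow> r1 \<noteq> r2 \<and> r1 \<noteq> r3 \<and> r2 \<noteq> r3"
    using assms unfolding Glue_def TT_def by (smt (verit) mem_Collect_eq)
  define \<phi> where "\<phi> = case_sum \<psi>1 (case_sum \<psi>2 \<psi>3)"
  have "p1 \<phi> = \<psi>1" "p2 \<phi> = \<psi>2" "p3 \<phi> = \<psi>3"
    using h(2,4,6) by (auto simp: fun_eq_iff p1_def p2_def p3_def \<phi>_def tuple_def)
  moreover have "\<phi> (Inl (nr N1)) = r1" "\<phi> (Inr (Inl (nr N2))) = r2" "\<phi> (Inr (Inr (nr N3))) = r3"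
    using h(2,4,6) by (auto simp: \<phi>_def tuple_def)
  ultimately have "col G D \<phi>" using h by (simp add: col_G)
  then show ?thesis by (auto simp: colourable_def col_del)
qed

lemma nocol: assumes "perfect N1" "perfect N2" "perfect N3" shows "\<not> colourable G"
proof
  assume "colourable G"
  then obtain \<phi> where "col G {} \<phi>" by (auto simp: colourable_def col_empty)
  then have c: "col (neg_pole N1) {} (p1 \<phi>)" "col (neg_pole N2) {} (p2 \<phi>)" "col (neg_pole N3) {} (p3 \<phi>)"
    by (simp_all add: col_G)
  have pp: "{tuple N1 \<psi> | \<psi>. is_colouring (neg_pole N1) \<psi>} = PS"
    "{tuple N2 \<psi> | \<psi>. is_colouring (neg_pole N2) \<psi>} = PS"
    "{tuple N3 \<psi> | \<psi>. is_colouring (neg_pole N3) \<psi>} = PS"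
    using assms unfolding perfect_def PS_def by simp_all
  have "tuple N1 (p1 \<phi>) \<in> {tuple N1 \<psi> | \<psi>. is_colouring (neg_pole N1) \<psi>}"
    "tuple N2 (p2 \<phi>) \<in> {tuple N2 \<psi> | \<psi>. is_colouring (neg_pole N2) \<psi>}"
    "tuple N3 (p3 \<phi>) \<in> {tuple N3 \<psi> | \<psi>. is_colouring (neg_pole N3) \<psi>}"
    using c by (auto simp: col_empty)
  then have "tuple N1 (p1 \<phi>) \<in> PS" "tuple N2 (p2 \<phi>) \<in> PS" "tuple N3 (p3 \<phi>) \<in> PS"
    unfolding pp by simp_all
  then have "(\<phi> (Inr (Inr (no1 N3))), \<phi> (Inr (Inr (no2 N3))), \<phi> (Inl (no1 N1)), \<phi> (Inl (no2 N1)), \<phi> (Inl (nr N1))) \<in> PS"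
    "(\<phi> (Inl (no1 N1)), \<phi> (Inl (no2 N1)), \<phi> (Inr (Inl (no1 N2))), \<phi> (Inr (Inl (no2 N2))), \<phi> (Inr (Inl (nr N2)))) \<in> PS"
    "(\<phi> (Inr (Inl (no1 N2))), \<phi> (Inr (Inl (no2 N2))), \<phi> (Inr (Inr (no1 N3))), \<phi> (Inr (Inr (no2 N3))), \<phi> (Inr (Inr (nr N3)))) \<in> PS"
    by (simp_all add: tuple_def p1_def p2_def p3_def sd)
  then show False using PS_char by blast
qed

end

locale nnnpf = nnn N1 N2 N3 + p1: negpf N1 + p2: negpf N2 + p3: negpf N3
  for N1 :: "('v1,'e1) negator" and N2 :: "('v2,'e2) negator" and N3 :: "('v3,'e3) negator"
begin

lemma glue': assumes "Glue (TT N1 D1) (TT N2 D2) (TT N3 D3) c"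
  "D1 = {x. Some (Inl x) \<in> D}" "D2 = {x. Some (Inr (Inl x)) \<in> D}" "D3 = {x. Some (Inr (Inr x)) \<in> D}"
  "c = (None \<notin> D)"
  shows "colourable (del_verts G D)"
  using glue assms by simp

lemma k01: "((0::bit),(1::bit)) \<in> KK" "((1::bit),(0::bit)) \<in> KK" "((0::bit),(1::bit)) \<noteq> (1,0)"
  by (auto simp: KK_def)

lemma c_N1: assumes "a \<in> verts (neg_pole N1)" shows "colourable (del_verts G {None, Some (Inl a)})"
proof -
  have "((0,1),(0,1),(1,0),(1,0),(0,1)) \<in> TT N1 {a}" using p1.TT_II[OF assms] k01 by blast
  from L_center[OF p2.PS_sub p3.PS_sub this k01] show ?thesis by (rule glue') auto
qed

lemma c_N2: assumes "a \<in> verts (neg_pole N2)" shows "colourable (del_verts G {None, Some (Inr (Inl a))})"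
proof -
  have "((0,1),(0,1),(1,0),(1,0),(0,1)) \<in> TT N2 {a}" using p2.TT_II[OF assms] k01 by blast
  from Glue_rot[OF L_center[OF p3.PS_sub p1.PS_sub this k01]] show ?thesis by (rule glue') auto
qed

lemma c_N3: assumes "a \<in> verts (neg_pole N3)" shows "colourable (del_verts G {None, Some (Inr (Inr a))})"
proof -
  have "((0,1),(0,1),(1,0),(1,0),(0,1)) \<in> TT N3 {a}" using p3.TT_II[OF assms] k01 by blast
  from Glue_rot[OF Glue_rot[OF L_center[OF p1.PS_sub p2.PS_sub this k01]]] show ?thesis by (rule glue') auto
qed

lemma c_11: assumes "a \<in> verts (neg_pole N1)" "a' \<in> verts (neg_pole N1)" "a \<noteq> a'"
  shows "colourable (del_verts G {Some (Inl a), Some (Inl a')})"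
proof -
  obtain w x y z where h: "(w,x,y,z,(w+x)+(y+z)) \<in> TT N1 {a,a'}" "w \<in> KK" "x \<in> KK" "y \<in> KK" "z \<in> KK"
     "w \<noteq> x" "y \<noteq> z" "w + x \<noteq> y + z" using p1.TT_Z[OF assms] by blast
  from L_same[OF p2.PS_sub p3.PS_sub h] show ?thesis by (rule glue') auto
qed

lemma c_22: assumes "a \<in> verts (neg_pole N2)" "a' \<in> verts (neg_pole N2)" "a \<noteq> a'"
  shows "colourable (del_verts G {Some (Inr (Inl a)), Some (Inr (Inl a'))})"
proof -
  obtain w x y z where h: "(w,x,y,z,(w+x)+(y+z)) \<in> TT N2 {a,a'}" "w \<in> KK" "x \<in> KK" "y \<in> KK" "z \<in> KK"
     "w \<noteq> x" "y \<noteq> z" "w + x \<noteq> y + z" using p2.TT_Z[OF assms] by blast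
  from Glue_rot[OF L_same[OF p3.PS_sub p1.PS_sub h]] show ?thesis by (rule glue') auto
qed

lemma c_33: assumes "a \<in> verts (neg_pole N3)" "a' \<in> verts (neg_pole N3)" "a \<noteq> a'"
  shows "colourable (del_verts G {Some (Inr (Inr a)), Some (Inr (Inr a'))})"
proof -
  obtain w x y z where h: "(w,x,y,z,(w+x)+(y+z)) \<in> TT N3 {a,a'}" "w \<in> KK" "x \<in> KK" "y \<in> KK" "z \<in> KK"
     "w \<noteq> x" "y \<noteq> z" "w + x \<noteq> y + z" using p3.TT_Z[OF assms] by blast
  from Glue_rot[OF Glue_rot[OF L_same[OF p1.PS_sub p2.PS_sub h]]] show ?thesis by (rule glue') auto
qed

lemma c_12: assumes "a \<in> verts (neg_pole N1)" "b \<in> verts (neg_pole N2)"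
  shows "colourable (del_verts G {Some (Inl a), Some (Inr (Inl b))})"
proof -
  obtain p c d r where h: "(p,p,c,d,r) \<in> TT N2 {b}" "p \<in> KK" "c \<in> KK" "d \<in> KK" "r \<in> KK" "c \<noteq> d" "r = c \<or> r = d"
    using p2.TT_I[OF assms(2)] by blast
  from L_adj[OF p1.TT_II[OF assms(1)] h p3.PS_sub] show ?thesis by (rule glue') auto
qed

lemma c_23: assumes "a \<in> verts (neg_pole N2)" "b \<in> verts (neg_pole N3)"
  shows "colourable (del_verts G {Some (Inr (Inl a)), Some (Inr (Inr b))})"
proof -
  obtain p c d r where h: "(p,p,c,d,r) \<in> TT N3 {b}" "p \<in> KK" "c \<in> KK" "d \<in> KK" "r \<in> KK" "c \<noteq> d" "r = c \<or> r = d"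
    using p3.TT_I[OF assms(2)] by blast
  from Glue_rot[OF L_adj[OF p2.TT_II[OF assms(1)] h p1.PS_sub]] show ?thesis by (rule glue') auto
qed

lemma c_31: assumes "a \<in> verts (neg_pole N3)" "b \<in> verts (neg_pole N1)"
  shows "colourable (del_verts G {Some (Inr (Inr a)), Some (Inl b)})"
proof -
  obtain p c d r where h: "(p,p,c,d,r) \<in> TT N1 {b}" "p \<in> KK" "c \<in> KK" "d \<in> KK" "r \<in> KK" "c \<noteq> d" "r = c \<or> r = d"
    using p1.TT_I[OF assms(2)] by blast
  from Glue_rot[OF Glue_rot[OF L_adj[OF p3.TT_II[OF assms(1)] h p2.PS_sub]]] show ?thesis by (rule glue') auto
qed

lemma vcases: assumes "x \<in> verts G"
  obtains "x = None" | a where "a \<in> verts (neg_pole N1)" "x = Some (Inl a)"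
    | a where "a \<in> verts (neg_pole N2)" "x = Some (Inr (Inl a))"
    | a where "a \<in> verts (neg_pole N3)" "x = Some (Inr (Inr a))"
  using assms unfolding verts_G by auto

lemma crit: assumes "x \<in> verts G" "y \<in> verts G" "x \<noteq> y"
  shows "colourable (del_verts G {x,y})"
  using assms(1)
proof (cases rule: vcases)
  case 1
  from assms(2) show ?thesis
  proof (cases rule: vcases)
    case 1 then show ?thesis using \<open>x = None\<close> assms(3) by simp
  next
    case 2 then show ?thesis using \<open>x = None\<close> c_N1 by simp
  next
    case 3 then show ?thesis using \<open>x = None\<close> c_N2 by simp
  next
    case 4 then show ?thesis using \<open>x = None\<close> c_N3 by simp
  qed
next
  case (2 a)
  from assms(2) show ?thesis
  proof (cases rule: vcases)
    case 1 then show ?thesis using 2 c_N1 by (simp add: insert_commute)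
  next
    case (2 b) then show ?thesis using \<open>x = Some (Inl a)\<close> \<open>a \<in> _\<close> c_11 assms(3) by simp
  next
    case (3 b) then show ?thesis using \<open>x = Some (Inl a)\<close> \<open>a \<in> _\<close> c_12 by simp
  next
    case (4 b) then show ?thesis using \<open>x = Some (Inl a)\<close> \<open>a \<in> _\<close> c_31 by (simp add: insert_commute)
  qed
next
  case (3 a)
  from assms(2) show ?thesis
  proof (cases rule: vcases)
    case 1 then show ?thesis using 3 c_N2 by (simp add: insert_commute)
  next
    case (2 b) then show ?thesis using \<open>x = Some (Inr (Inl a))\<close> \<open>a \<in> _\<close> c_12 by (simp add: insert_commute)
  next
    case (3 b) then show ?thesis using \<open>x = Some (Inr (Inl a))\<close> \<open>a \<in> _\<close> c_22 assms(3) by simp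
  next
    case (4 b) then show ?thesis using \<open>x = Some (Inr (Inl a))\<close> \<open>a \<in> _\<close> c_23 by simp
  qed
next
  case (4 a)
  from assms(2) show ?thesis
  proof (cases rule: vcases)
    case 1 then show ?thesis using 4 c_N3 by (simp add: insert_commute)
  next
    case (2 b) then show ?thesis using \<open>x = Some (Inr (Inr a))\<close> \<open>a \<in> _\<close> c_31 by simp
  next
    case (3 b) then show ?thesis using \<open>x = Some (Inr (Inr a))\<close> \<open>a \<in> _\<close> c_23 by (simp add: insert_commute)
  next
    case (4 b) then show ?thesis using \<open>x = Some (Inr (Inr a))\<close> \<open>a \<in> _\<close> c_33 assms(3) by simp
  qed
qed

lemma bicrit: "bicritical G"
proof -
  have c: "\<forall>x\<in>verts G. \<forall>y\<in>verts G. x \<noteq> y \<longrightarrow> colourable (del_verts G {x, y})"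
    using crit by blast
  have nc: "\<not> colourable G" using nocol p1.perf p2.perf p3.perf by blast
  have ne: "verts G \<noteq> {}" by (simp add: verts_G)
  have "connected_graph G" using crit_connected[OF graph_G nc c ne] .
  then show ?thesis using c nc graph_G unfolding bicritical_def snark_def by blast
qed

end

theorem theorem15:
  fixes N1 :: "('v1, 'e1) negator" and N2 :: "('v2, 'e2) negator"
    and N3 :: "('v3, 'e3) negator"
  assumes "is_negator N1" "perfect N1" "feasible N1"
      and "is_negator N2" "perfect N2" "feasible N2"
      and "is_negator N3" "perfect N3" "feasible N3"
  shows "bicritical (NNN N1 N2 N3)"
proof -
  interpret nnnpf N1 N2 N3
    using assms unfolding nnnpf_def nnn_def negpf_def negpf_axioms_def negl_def by blast
  show ?thesis using bicrit G_eq by simp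
qed


end
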